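(* Let $\mathcal{C}\subset(\mathbb{C}^2)^{\otimes n}$ be a stabilizer code on $n$ qubits encoding one logical qubit, with minimal set of stabilizer generators $g_1,\dots,g_{n-1}$. For $\mathbf{s}\in\{0,1\}^{n-1}$ let $\Pi_{\mathbf{s}}=\prod_{i=1}^{n-1}\frac{\mathbb{I}+(-1)^{s_i}g_i}{2}$ (so $\Pi_{\mathbf{0}}$ is the projector onto the code space), and for each $\mathbf{s}$ let $C_{\mathbf{s}}$ be any Pauli operator with $\Pi_{\mathbf{s}}C_{\mathbf{s}}=C_{\mathbf{s}}\Pi_{\mathbf{0}}$ (a recovery operation). Let $U$ be a unitary on the $n$ physical qubits. Assume: (1) every element of the stabilizer group has even Pauli weight; (2) the code is CSS and its $X$- and $Z$-distances $d_x$, $d_z$ are both odd; (3) $U$ commutes with the antiunitary time-reversal operator $\mathcal{T}=\mathcal{K}\prod_{j=1}^n(iY_j)$, where $\mathcal{K}$ denotes complex conjugation in the computational basis. Then for every $\mathbf{s}$, $$C_{\mathbf{s}}\Pi_{\mathbf{s}}U\Pi_{\mathbf{0}}=\sqrt{p(\mathbf{s})}\,U_{L,\mathbf{s}}\Pi_{\mathbf{0}},$$ where $p(\mathbf{s})$ is a probability distribution over syndromes $\mathbf{s}\in\{0,1\}^{n-1}$ and each $U_{L,\mathbf{s}}$ is a unitary on the logical subspace (code space).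
   Context: The Pauli weight $|P|$ of a Pauli string $P$ is the number of tensor factors that are not the identity. A stabilizer code is CSS if its stabilizer group is generated by operators that are each tensor products of only $X$ and $I$, or only of $Z$ and $I$; $d_x$ and $d_z$ are the minimal weights of nontrivial logical $X$-type and $Z$-type operators. $Y_j$ denotes the Pauli $Y$ on qubit $j$. A "unitary on the logical subspace" means an operator on the code space $\Pi_{\mathbf{0}}(\mathbb{C}^2)^{\otimes n}$ that is unitary there. *)

theory Defs
  imports "Jordan_Normal_Form.Matrix"
begin

datatype pauli1 = PI | PX | PY | PZ

fun pauli1_entry :: "pauli1 \<Rightarrow> nat \<Rightarrow> nat \<Rightarrow> complex" where
  "pauli1_entry PI a b = (if a = b then 1 else 0)"
| "pauli1_entry PX a b = (if a \<noteq> b then 1 else 0)"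
| "pauli1_entry PY a b = (if a = b then 0 else if a = 0 then - \<i> else \<i>)"
| "pauli1_entry PZ a b = (if a = b then (if a = 0 then 1 else -1) else 0)"

definition qbit :: "nat \<Rightarrow> nat \<Rightarrow> nat" where
  "qbit j a = a div 2 ^ j mod 2"

definition pauli_mat :: "nat \<Rightarrow> (nat \<Rightarrow> pauli1) \<Rightarrow> complex mat" where
  "pauli_mat n p = mat (2 ^ n) (2 ^ n)
     (\<lambda>(a, b). \<Prod>j<n. pauli1_entry (p j) (qbit j a) (qbit j b))"

definition phases :: "complex set" where
  "phases = {1, -1, \<i>, - \<i>}"

definition pauli_ops :: "nat \<Rightarrow> complex mat set" where
  "pauli_ops n = {c \<cdot>\<^sub>m pauli_mat n p | c p. c \<in> phases}"

definition pauli_weight :: "nat \<Rightarrow> (nat \<Rightarrow> pauli1) \<Rightarrow> nat" where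
  "pauli_weight n p = card {j. j < n \<and> p j \<noteq> PI}"

definition x_type :: "nat \<Rightarrow> (nat \<Rightarrow> pauli1) \<Rightarrow> bool" where
  "x_type n p = (\<forall>j<n. p j \<in> {PI, PX})"

definition z_type :: "nat \<Rightarrow> (nat \<Rightarrow> pauli1) \<Rightarrow> bool" where
  "z_type n p = (\<forall>j<n. p j \<in> {PI, PZ})"

text \<open>Group generated by a set H of 2^n x 2^n matrices (closure of the identity under
  left multiplication by generators; for Pauli operators, which have finite order,
  this is the generated group).\<close>
inductive_set gen_group :: "nat \<Rightarrow> complex mat set \<Rightarrow> complex mat set"
  for n :: nat and H :: "complex mat set" where
  gen_one: "1\<^sub>m (2 ^ n) \<in> gen_group n H"
| gen_mult: "h \<in> H \<Longrightarrow> M \<in> gen_group n H \<Longrightarrow> h * M \<in> gen_group n H"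

definition stab_group :: "nat \<Rightarrow> nat \<Rightarrow> (nat \<Rightarrow> complex mat) \<Rightarrow> complex mat set" where
  "stab_group n m g = gen_group n (g ` {..<m})"

definition prod_subset :: "nat \<Rightarrow> nat \<Rightarrow> (nat \<Rightarrow> complex mat) \<Rightarrow> nat set \<Rightarrow> complex mat" where
  "prod_subset n m g A = foldr (\<lambda>i M. (if i \<in> A then g i else 1\<^sub>m (2 ^ n)) * M) [0..<m] (1\<^sub>m (2 ^ n))"

definition stabilizer_generators :: "nat \<Rightarrow> nat \<Rightarrow> (nat \<Rightarrow> complex mat) \<Rightarrow> bool" where
  "stabilizer_generators n m g \<longleftrightarrow>
     (\<forall>i<m. g i \<in> pauli_ops n) \<and>
     (\<forall>i<m. \<forall>j<m. g i * g j = g j * g i) \<and>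
     - 1\<^sub>m (2 ^ n) \<notin> stab_group n m g \<and>
     (\<forall>A \<subseteq> {..<m}. prod_subset n m g A = 1\<^sub>m (2 ^ n) \<longrightarrow> A = {})"

definition is_css :: "nat \<Rightarrow> complex mat set \<Rightarrow> bool" where
  "is_css n S \<longleftrightarrow> (\<exists>H. (\<forall>h\<in>H. \<exists>c p. c \<in> phases \<and> h = c \<cdot>\<^sub>m pauli_mat n p \<and>
                                          (x_type n p \<or> z_type n p)) \<and>
                       gen_group n H = S)"

definition nontrivial_logical :: "nat \<Rightarrow> complex mat set \<Rightarrow> (nat \<Rightarrow> pauli1) \<Rightarrow> bool" where
  "nontrivial_logical n S p \<longleftrightarrow>
     (\<forall>M\<in>S. M * pauli_mat n p = pauli_mat n p * M) \<and>
     (\<forall>c\<in>phases. c \<cdot>\<^sub>m pauli_mat n p \<notin> S)"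

definition dist_x :: "nat \<Rightarrow> complex mat set \<Rightarrow> nat" where
  "dist_x n S = (LEAST w. \<exists>p. x_type n p \<and> nontrivial_logical n S p \<and> pauli_weight n p = w)"

definition dist_z :: "nat \<Rightarrow> complex mat set \<Rightarrow> nat" where
  "dist_z n S = (LEAST w. \<exists>p. z_type n p \<and> nontrivial_logical n S p \<and> pauli_weight n p = w)"

definition syndromes :: "nat \<Rightarrow> bool list set" where
  "syndromes m = {s. length s = m}"

definition syndrome_proj :: "nat \<Rightarrow> nat \<Rightarrow> (nat \<Rightarrow> complex mat) \<Rightarrow> bool list \<Rightarrow> complex mat" where
  "syndrome_proj n m g s = foldr (\<lambda>i M.
      ((1 / 2 :: complex) \<cdot>\<^sub>m (1\<^sub>m (2 ^ n) + (if s ! i then -1 else 1 :: complex) \<cdot>\<^sub>m g i)) * M)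
      [0..<m] (1\<^sub>m (2 ^ n))"

definition adj :: "complex mat \<Rightarrow> complex mat" where
  "adj M = mat (dim_col M) (dim_row M) (\<lambda>(i, j). cnj (M $$ (j, i)))"

definition unitary_mat :: "nat \<Rightarrow> complex mat \<Rightarrow> bool" where
  "unitary_mat N U \<longleftrightarrow> U \<in> carrier_mat N N \<and> adj U * U = 1\<^sub>m N \<and> U * adj U = 1\<^sub>m N"

text \<open>V restricted to the code space (projector P) is a unitary on it: V maps the code space
  into itself and is isometric there (hence, finite dimension, unitary on it).\<close>
definition unitary_on_code :: "nat \<Rightarrow> complex mat \<Rightarrow> complex mat \<Rightarrow> bool" where
  "unitary_on_code N P V \<longleftrightarrow> V \<in> carrier_mat N N \<and>
     P * (V * P) = V * P \<and> adj (V * P) * (V * P) = P"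

definition vec_cnj :: "complex vec \<Rightarrow> complex vec" where
  "vec_cnj v = vec (dim_vec v) (\<lambda>i. cnj (v $ i))"

definition iY_all :: "nat \<Rightarrow> complex mat" where
  "iY_all n = (\<i> ^ n) \<cdot>\<^sub>m pauli_mat n (\<lambda>_. PY)"

definition time_rev :: "nat \<Rightarrow> complex vec \<Rightarrow> complex vec" where
  "time_rev n v = vec_cnj (iY_all n *\<^sub>v v)"

end

theory Submission
  imports Defs
begin

lemma qbit_lt2[simp]: "qbit j a < 2"
  unfolding qbit_def by simp

lemma qbit_low: "a < 2 ^ n \<Longrightarrow> qbit n a = 0"
  unfolding qbit_def by simp

lemma qbit_top: "a < 2 ^ n \<Longrightarrow> qbit n (2 ^ n + a) = 1"
  unfolding qbit_def by simp

lemma qbit_shift: assumes "j < n" shows "qbit j (2 ^ n + a) = qbit j a"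
proof -
  have "(2::nat) ^ n = 2 ^ j * 2 ^ (n - j)" using assms by (simp flip: power_add)
  then have "(2 ^ n + a) div 2 ^ j = 2 ^ (n - j) + a div 2 ^ j" by simp
  moreover have "(2::nat) ^ (n - j) = 2 * 2 ^ (n - j - 1)" using assms
    by (simp flip: power_Suc)
  ultimately show ?thesis unfolding qbit_def by simp
qed

lemma sum_split_add:
  "(\<Sum>a<k + l. f a) = (\<Sum>a<(k::nat). f a) + (\<Sum>a<l. f (k + a))"
proof (induction l)
  case (Suc l)
  then show ?case by (simp add: add.assoc)
qed simp

lemma sum_split_pow2:
  "(\<Sum>a<(2::nat) ^ Suc n. f a) = (\<Sum>a<(2::nat) ^ n. f a) + (\<Sum>a<(2::nat) ^ n. f (2 ^ n + a))"
proof -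
  have e: "(2::nat) ^ Suc n = 2 ^ n + 2 ^ n" by simp
  show ?thesis unfolding e by (rule sum_split_add)
qed

lemma sum_bits:
  "(\<Sum>a<2 ^ n. \<Prod>j<n. F j (qbit j a)) = (\<Prod>j<n. F j 0 + F j 1 :: complex)"
proof (induction n)
  case 0
  then show ?case by simp
next
  case (Suc n)
  have A: "(\<Sum>a<2 ^ n. \<Prod>j<Suc n. F j (qbit j a)) = (\<Sum>a<2 ^ n. \<Prod>j<n. F j (qbit j a)) * F n 0"
    by (simp add: sum_distrib_right qbit_low)
  have B: "(\<Sum>a<2 ^ n. \<Prod>j<Suc n. F j (qbit j (2 ^ n + a))) = (\<Sum>a<2 ^ n. \<Prod>j<n. F j (qbit j a)) * F n 1"
    by (simp add: sum_distrib_right qbit_top qbit_shift)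
  show ?case
    unfolding sum_split_pow2 A B Suc by (simp add: distrib_left)
qed

lemma bits_eq: "a < 2 ^ n \<Longrightarrow> b < 2 ^ n \<Longrightarrow> (\<forall>j<n. qbit j a = qbit j b) \<Longrightarrow> a = b"
proof (induction n arbitrary: a b)
  case 0
  then show ?case by simp
next
  case (Suc n)
  have q: "qbit (Suc j) x = qbit j (x div 2)" for j x
    unfolding qbit_def by (simp add: div_mult2_eq)
  have "a div 2 = b div 2"
    using Suc.prems by (intro Suc.IH) (auto simp: q[symmetric] less_mult_imp_div_less)
  moreover have "a mod 2 = b mod 2" using Suc.prems(3) by (auto simp: qbit_def)
  ultimately show ?case by (metis div_mult_mod_eq)
qed

section \<open>Tensor matrices\<close>

definition tens :: "nat \<Rightarrow> (nat \<Rightarrow> nat \<Rightarrow> nat \<Rightarrow> complex) \<Rightarrow> complex mat" where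
  "tens n f = mat (2 ^ n) (2 ^ n) (\<lambda>(a, b). \<Prod>j<n. f j (qbit j a) (qbit j b))"

lemma tens_carrier[simp]: "tens n f \<in> carrier_mat (2 ^ n) (2 ^ n)"
  unfolding tens_def by simp

lemma tens_dims[simp]: "dim_row (tens n f) = 2 ^ n" "dim_col (tens n f) = 2 ^ n"
  unfolding tens_def by simp_all

lemma tens_index: "a < 2 ^ n \<Longrightarrow> b < 2 ^ n \<Longrightarrow> tens n f $$ (a, b) = (\<Prod>j<n. f j (qbit j a) (qbit j b))"
  unfolding tens_def by simp

lemma pauli_mat_tens: "pauli_mat n p = tens n (\<lambda>j. pauli1_entry (p j))"
  unfolding pauli_mat_def tens_def by simp

lemma tens_mult:
  "tens n f * tens n g = tens n (\<lambda>j a c. f j a 0 * g j 0 c + f j a 1 * g j 1 c)"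
proof (rule eq_matI)
  fix a c assume a: "a < dim_row (tens n (\<lambda>j a c. f j a 0 * g j 0 c + f j a 1 * g j 1 c))"
    and c: "c < dim_col (tens n (\<lambda>j a c. f j a 0 * g j 0 c + f j a 1 * g j 1 c))"
  then have a': "a < 2 ^ n" and c': "c < 2 ^ n" by simp_all
  have "(tens n f * tens n g) $$ (a, c) = (\<Sum>b<2 ^ n. tens n f $$ (a, b) * tens n g $$ (b, c))"
    using a' c' by (simp add: scalar_prod_def lessThan_atLeast0)
  also have "\<dots> = (\<Sum>b<2 ^ n. \<Prod>j<n. f j (qbit j a) (qbit j b) * g j (qbit j b) (qbit j c))"
    using a' c' by (simp add: tens_index prod.distrib)
  also have "\<dots> = (\<Prod>j<n. f j (qbit j a) 0 * g j 0 (qbit j c) + f j (qbit j a) 1 * g j 1 (qbit j c))"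
    by (rule sum_bits)
  also have "\<dots> = tens n (\<lambda>j a c. f j a 0 * g j 0 c + f j a 1 * g j 1 c) $$ (a, c)"
    using a' c' by (simp add: tens_index)
  finally show "(tens n f * tens n g) $$ (a, c) = tens n (\<lambda>j a c. f j a 0 * g j 0 c + f j a 1 * g j 1 c) $$ (a, c)" .
qed auto

definition tr :: "complex mat \<Rightarrow> complex" where
  "tr M = (\<Sum>i<dim_row M. M $$ (i, i))"

lemma tens_trace: "tr (tens n f) = (\<Prod>j<n. f j 0 0 + f j 1 1)"
  unfolding tr_def by (simp add: tens_index sum_bits[of "\<lambda>j b. f j b b"])

lemma tens_cong:
  assumes "\<And>j a b. j < n \<Longrightarrow> a < 2 \<Longrightarrow> b < 2 \<Longrightarrow> f j a b = h j a b"
  shows "tens n f = tens n h"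
  unfolding tens_def using assms by (intro eq_matI) (auto intro!: prod.cong)

lemma tens_factor:
  assumes "\<And>j a b. j < n \<Longrightarrow> a < 2 \<Longrightarrow> b < 2 \<Longrightarrow> f j a b = d j * h j a b"
  shows "tens n f = (\<Prod>j<n. d j) \<cdot>\<^sub>m tens n h"
  unfolding tens_def using assms by (intro eq_matI) (auto simp: prod.distrib intro!: prod.cong)

lemma tens_one: "tens n (\<lambda>j a b. if a = b then 1 else 0) = 1\<^sub>m (2 ^ n)"
proof (rule eq_matI)
  fix a b assume "a < dim_row (1\<^sub>m (2 ^ n))" "b < dim_col (1\<^sub>m (2 ^ n) :: complex mat)"
  then have ab: "a < 2 ^ n" "b < 2 ^ n" by auto
  have "(\<Prod>j<n. (if qbit j a = qbit j b then 1 else 0::complex)) = (if a = b then 1 else 0)"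
  proof (cases "a = b")
    case False
    then obtain j where "j < n" "qbit j a \<noteq> qbit j b" using bits_eq[OF ab] by blast
    then show ?thesis using False by (auto simp: prod_zero_iff)
  qed simp
  then show "tens n (\<lambda>j a b. if a = b then 1 else 0) $$ (a, b) = 1\<^sub>m (2 ^ n) $$ (a, b)"
    using ab by (simp add: tens_index)
qed auto

definition adj_f where "adj_f f = (\<lambda>j a b. cnj (f j b a))"

lemma tens_adj: "adj (tens n f) = tens n (\<lambda>j a b. cnj (f j b a))"
  unfolding adj_def tens_def by (intro eq_matI) auto

definition cmat :: "complex mat \<Rightarrow> complex mat" where
  "cmat M = mat (dim_row M) (dim_col M) (\<lambda>(i, j). cnj (M $$ (i, j)))"

lemma tens_cmat: "cmat (tens n f) = tens n (\<lambda>j a b. cnj (f j a b))"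
  unfolding cmat_def tens_def by (intro eq_matI) auto

section \<open>Single-qubit Pauli algebra\<close>

fun pmul :: "pauli1 \<Rightarrow> pauli1 \<Rightarrow> pauli1" where
  "pmul PI q = q"
| "pmul PX PI = PX" | "pmul PX PX = PI" | "pmul PX PY = PZ" | "pmul PX PZ = PY"
| "pmul PY PI = PY" | "pmul PY PX = PZ" | "pmul PY PY = PI" | "pmul PY PZ = PX"
| "pmul PZ PI = PZ" | "pmul PZ PX = PY" | "pmul PZ PY = PX" | "pmul PZ PZ = PI"

fun pph :: "pauli1 \<Rightarrow> pauli1 \<Rightarrow> complex" where
  "pph PI q = 1"
| "pph PX PI = 1" | "pph PX PX = 1" | "pph PX PY = \<i>" | "pph PX PZ = - \<i>"
| "pph PY PI = 1" | "pph PY PX = - \<i>" | "pph PY PY = 1" | "pph PY PZ = \<i>"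
| "pph PZ PI = 1" | "pph PZ PX = \<i>" | "pph PZ PY = - \<i>" | "pph PZ PZ = 1"

definition ac :: "pauli1 \<Rightarrow> pauli1 \<Rightarrow> complex" where
  "ac a b = (if a = PI \<or> b = PI \<or> a = b then 1 else -1)"

lemma lt2_cases: "a < (2::nat) \<Longrightarrow> a = 0 \<or> a = 1" by auto

lemma p1_mult: "a < 2 \<Longrightarrow> c < 2 \<Longrightarrow>
  pauli1_entry p a 0 * pauli1_entry q 0 c + pauli1_entry p a 1 * pauli1_entry q 1 c
   = pph p q * pauli1_entry (pmul p q) a c"
  by (cases p; cases q; auto dest!: lt2_cases)

lemma p1_comm: "a < 2 \<Longrightarrow> c < 2 \<Longrightarrow>
  pauli1_entry p a 0 * pauli1_entry q 0 c + pauli1_entry p a 1 * pauli1_entry q 1 c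
   = ac p q * (pauli1_entry q a 0 * pauli1_entry p 0 c + pauli1_entry q a 1 * pauli1_entry p 1 c)"
  by (cases p; cases q; auto simp: ac_def dest!: lt2_cases)

lemma p1_Y: "a < 2 \<Longrightarrow> c < 2 \<Longrightarrow>
  pauli1_entry PY a 0 * pauli1_entry q 0 c + pauli1_entry PY a 1 * pauli1_entry q 1 c
   = (if q = PI then 1 else -1) * (cnj (pauli1_entry q a 0) * pauli1_entry PY 0 c + cnj (pauli1_entry q a 1) * pauli1_entry PY 1 c)"
  by (cases q; auto dest!: lt2_cases)

lemma p1_adj: "a < 2 \<Longrightarrow> c < 2 \<Longrightarrow> cnj (pauli1_entry p c a) = pauli1_entry p a c"
  by (cases p; auto dest!: lt2_cases)

lemma p1_trace: "pauli1_entry p 0 0 + pauli1_entry p 1 1 = (if p = PI then 2 else 0)"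
  by (cases p; auto)

lemma pmul_self[simp]: "pmul p p = PI" by (cases p; auto)
lemma pph_self[simp]: "pph p p = 1" by (cases p; auto)
lemma pmul_I_iff: "pmul p q = PI \<longleftrightarrow> p = q" by (cases p; cases q; auto)

lemma phases_mult: "a \<in> phases \<Longrightarrow> b \<in> phases \<Longrightarrow> a * b \<in> phases"
  unfolding phases_def by auto

lemma phases_nz: "a \<in> phases \<Longrightarrow> a \<noteq> 0" unfolding phases_def by auto
lemma phases_cnj: "a \<in> phases \<Longrightarrow> cnj a * a = 1" unfolding phases_def by auto
lemma phases_inv: "a \<in> phases \<Longrightarrow> 1 / a \<in> phases" unfolding phases_def by auto

lemma pph_phases: "pph p q \<in> phases" unfolding phases_def by (cases p; cases q; auto)

lemma prod_phases: "(\<And>j. j < (n::nat) \<Longrightarrow> f j \<in> phases) \<Longrightarrow> (\<Prod>j<n. f j) \<in> phases"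
proof (induction n)
  case 0 then show ?case by (simp add: phases_def)
next
  case (Suc n) then show ?case by (simp add: phases_mult)
qed

lemma sign_prod:
  "(\<Prod>j<(n::nat). if P j then 1 else -1 :: complex) = (-1) ^ card {j. j < n \<and> \<not> P j}"
proof (induction n)
  case 0 then show ?case by simp
next
  case (Suc n)
  show ?case
  proof (cases "P n")
    case True
    then have "{j. j < Suc n \<and> \<not> P j} = {j. j < n \<and> \<not> P j}" by (auto simp: less_Suc_eq)
    then show ?thesis using Suc True by simp
  next
    case False
    then have "{j. j < Suc n \<and> \<not> P j} = insert n {j. j < n \<and> \<not> P j}" by (auto simp: less_Suc_eq)
    then show ?thesis using Suc False by simp
  qed
qed

lemma sign_prod_pm: "(\<Prod>j<(n::nat). if P j then 1 else -1 :: complex) \<in> {1, -1}"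
  unfolding sign_prod by (cases "even (card {j. j < n \<and> \<not> P j})") auto

lemma smult_one_mat[simp]: "(1::'a::monoid_mult) \<cdot>\<^sub>m A = A"
  by (intro eq_matI) auto

lemma smult_smult_mat[simp]: "(a::'a::semigroup_mult) \<cdot>\<^sub>m (b \<cdot>\<^sub>m A) = (a * b) \<cdot>\<^sub>m A"
  by (intro eq_matI) (auto simp: mult.assoc)

lemma pauli_carrier[simp]: "pauli_mat n p \<in> carrier_mat (2 ^ n) (2 ^ n)"
  unfolding pauli_mat_tens by simp

lemma pauli_dims[simp]: "dim_row (pauli_mat n p) = 2 ^ n" "dim_col (pauli_mat n p) = 2 ^ n"
  unfolding pauli_mat_tens by simp_all

lemma pauli_mult:
  "pauli_mat n p * pauli_mat n q = (\<Prod>j<n. pph (p j) (q j)) \<cdot>\<^sub>m pauli_mat n (\<lambda>j. pmul (p j) (q j))"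
  unfolding pauli_mat_tens tens_mult by (rule tens_factor) (rule p1_mult; simp)

lemma pauli_comm:
  "pauli_mat n p * pauli_mat n q = (\<Prod>j<n. ac (p j) (q j)) \<cdot>\<^sub>m (pauli_mat n q * pauli_mat n p)"
  unfolding pauli_mat_tens tens_mult by (rule tens_factor) (rule p1_comm; simp)

lemma pauli_eq: "(\<And>j. j < n \<Longrightarrow> p j = q j) \<Longrightarrow> pauli_mat n p = pauli_mat n q"
  unfolding pauli_mat_tens by (rule tens_cong) simp

lemma pauli_I: "(\<And>j. j < n \<Longrightarrow> p j = PI) \<Longrightarrow> pauli_mat n p = 1\<^sub>m (2 ^ n)"
  unfolding pauli_mat_tens tens_one[symmetric] by (rule tens_cong) simp

lemma pauli_sq: "pauli_mat n p * pauli_mat n p = 1\<^sub>m (2 ^ n)"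
  unfolding pauli_mult by (simp add: pauli_I)

lemma pauli_adj: "adj (pauli_mat n p) = pauli_mat n p"
  unfolding pauli_mat_tens tens_adj by (rule tens_cong) (simp add: p1_adj)

lemma pauli_trace: "tr (pauli_mat n p) = (if \<forall>j<n. p j = PI then 2 ^ n else 0)"
proof -
  have "tr (pauli_mat n p) = (\<Prod>j<n. if p j = PI then 2 else 0)"
    unfolding pauli_mat_tens tens_trace p1_trace ..
  then show ?thesis by (auto simp: prod_zero_iff)
qed

lemma pauli_Y_rel:
  "pauli_mat n (\<lambda>_. PY) * pauli_mat n p
   = (\<Prod>j<n. if p j = PI then 1 else -1) \<cdot>\<^sub>m (cmat (pauli_mat n p) * pauli_mat n (\<lambda>_. PY))"
  unfolding pauli_mat_tens tens_mult tens_cmat by (rule tens_factor) (rule p1_Y; simp)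

lemma cmat_Y: "cmat (pauli_mat n (\<lambda>_. PY)) = (-1) ^ n \<cdot>\<^sub>m pauli_mat n (\<lambda>_. PY)"
proof -
  have "cmat (pauli_mat n (\<lambda>_. PY)) = (\<Prod>j<n. -1) \<cdot>\<^sub>m pauli_mat n (\<lambda>_. PY)"
    unfolding pauli_mat_tens tens_cmat by (rule tens_factor) (auto dest!: lt2_cases)
  then show ?thesis by simp
qed

lemma adj_carrier[simp]: "A \<in> carrier_mat nr nc \<Longrightarrow> adj A \<in> carrier_mat nc nr"
  unfolding adj_def by simp

lemma adj_dims[simp]: "dim_row (adj A) = dim_col A" "dim_col (adj A) = dim_row A"
  unfolding adj_def by simp_all

lemma adj_index[simp]: "i < dim_col A \<Longrightarrow> j < dim_row A \<Longrightarrow> adj A $$ (i, j) = cnj (A $$ (j, i))"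
  unfolding adj_def by simp

lemma adj_adj[simp]: "adj (adj A) = A"
  by (intro eq_matI) auto

lemma adj_mult: "A \<in> carrier_mat nr n \<Longrightarrow> B \<in> carrier_mat n nc \<Longrightarrow> adj (A * B) = adj B * adj A"
  by (intro eq_matI) (auto simp: scalar_prod_def intro!: sum.cong)

lemma adj_add: "A \<in> carrier_mat nr nc \<Longrightarrow> B \<in> carrier_mat nr nc \<Longrightarrow> adj (A + B) = adj A + adj B"
  by (intro eq_matI) auto

lemma adj_minus: "A \<in> carrier_mat nr nc \<Longrightarrow> B \<in> carrier_mat nr nc \<Longrightarrow> adj (A - B) = adj A - adj B"
  by (intro eq_matI) auto

lemma adj_smult: "adj (c \<cdot>\<^sub>m A) = cnj c \<cdot>\<^sub>m adj A"
  by (intro eq_matI) auto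

lemma adj_one[simp]: "adj (1\<^sub>m N) = 1\<^sub>m N"
  by (intro eq_matI) auto

lemma tr_add: "A \<in> carrier_mat N N \<Longrightarrow> B \<in> carrier_mat N N \<Longrightarrow> tr (A + B) = tr A + tr B"
  unfolding tr_def by (simp add: sum.distrib)

lemma tr_minus: "A \<in> carrier_mat N N \<Longrightarrow> B \<in> carrier_mat N N \<Longrightarrow> tr (A - B) = tr A - tr B"
  unfolding tr_def by (simp add: sum_subtractf)

lemma tr_smult: "A \<in> carrier_mat N N \<Longrightarrow> tr (c \<cdot>\<^sub>m A) = c * tr A"
  unfolding tr_def by (simp add: sum_distrib_left)

lemma minus_zero_mat[simp]: "A \<in> carrier_mat nr nc \<Longrightarrow> A - 0\<^sub>m nr nc = (A :: 'a :: group_add mat)"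
  by (intro eq_matI) auto

lemma cnj_mult_self: "cnj z * z = complex_of_real ((cmod z)\<^sup>2)"
  by (metis complex_norm_square mult.commute)

lemma tr_one[simp]: "tr (1\<^sub>m N) = of_nat N"
  unfolding tr_def by simp

lemma tr_comm: assumes "A \<in> carrier_mat N M" "B \<in> carrier_mat M N" shows "tr (A * B) = tr (B * A)"
proof -
  have "tr (A * B) = (\<Sum>i<N. \<Sum>k<M. A $$ (i, k) * B $$ (k, i))"
    unfolding tr_def using assms by (simp add: scalar_prod_def lessThan_atLeast0)
  also have "\<dots> = (\<Sum>k<M. \<Sum>i<N. B $$ (k, i) * A $$ (i, k))"
    by (subst sum.swap) (simp add: mult.commute)
  also have "\<dots> = tr (B * A)"
    unfolding tr_def using assms by (simp add: scalar_prod_def lessThan_atLeast0)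
  finally show ?thesis .
qed

lemma tr_adj_self: assumes "A \<in> carrier_mat N M"
  shows "tr (adj A * A) = of_real (\<Sum>i<M. \<Sum>k<N. (cmod (A $$ (k, i)))\<^sup>2)"
proof -
  have "tr (adj A * A) = (\<Sum>i<M. \<Sum>k<N. cnj (A $$ (k, i)) * A $$ (k, i))"
    unfolding tr_def using assms by (simp add: scalar_prod_def lessThan_atLeast0)
  also have "\<dots> = (\<Sum>i<M. \<Sum>k<N. of_real ((cmod (A $$ (k, i)))\<^sup>2))"
    by (intro sum.cong refl) (rule cnj_mult_self)
  finally show ?thesis by simp
qed

lemma tr_adj_self_nonneg: assumes "A \<in> carrier_mat N M"
  shows "\<exists>r\<ge>0. tr (adj A * A) = of_real r"
  using tr_adj_self[OF assms] by (intro exI[of _ "\<Sum>i<M. \<Sum>k<N. (cmod (A $$ (k, i)))\<^sup>2"]) (auto intro!: sum_nonneg)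

lemma tr_adj_self_zero: assumes "A \<in> carrier_mat N M" "tr (adj A * A) = 0"
  shows "A = 0\<^sub>m N M"
proof (rule eq_matI)
  fix k i assume "k < dim_row (0\<^sub>m N M :: complex mat)" "i < dim_col (0\<^sub>m N M :: complex mat)"
  then have ki: "k < N" "i < M" by auto
  have "(\<Sum>i<M. \<Sum>k<N. (cmod (A $$ (k, i)))\<^sup>2) = 0"
    using assms(2) tr_adj_self[OF assms(1)] by (metis of_real_eq_0_iff)
  then have "\<forall>i\<in>{..<M}. (\<Sum>k<N. (cmod (A $$ (k, i)))\<^sup>2) = 0"
    by (subst (asm) sum_nonneg_eq_0_iff) (auto intro: sum_nonneg)
  then have "(\<Sum>k<N. (cmod (A $$ (k, i)))\<^sup>2) = 0" using ki by auto
  then have "\<forall>k\<in>{..<N}. (cmod (A $$ (k, i)))\<^sup>2 = 0"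
    by (subst (asm) sum_nonneg_eq_0_iff) auto
  then show "A $$ (k, i) = 0\<^sub>m N M $$ (k, i)" using ki by auto
qed (use assms in auto)

definition proj :: "nat \<Rightarrow> complex mat \<Rightarrow> bool" where
  "proj N P \<longleftrightarrow> P \<in> carrier_mat N N \<and> adj P = P \<and> P * P = P"

lemma proj_tr: assumes "proj N P" shows "\<exists>r\<ge>0. tr P = of_real r"
proof -
  have "tr P = tr (adj P * P)" using assms unfolding proj_def by simp
  then show ?thesis using tr_adj_self_nonneg[of P N N] assms unfolding proj_def by auto
qed

lemma proj_tr_zero: assumes "proj N P" "tr P = 0" shows "P = 0\<^sub>m N N"
proof -
  have "tr (adj P * P) = 0" using assms unfolding proj_def by simp
  then show ?thesis using tr_adj_self_zero[of P N N] assms unfolding proj_def by auto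
qed

lemma proj_sub: assumes "proj N Q" "proj N E" "Q * E = E" shows "proj N (Q - E)"
proof -
  have c: "Q \<in> carrier_mat N N" "E \<in> carrier_mat N N" using assms unfolding proj_def by auto
  have "E * Q = E"
  proof -
    have "E * Q = adj E * adj Q" using assms unfolding proj_def by simp
    also have "\<dots> = adj (Q * E)" using c by (simp add: adj_mult)
    finally show ?thesis using assms unfolding proj_def by simp
  qed
  moreover have "(Q - E) * (Q - E) = (Q - E) * Q - (Q - E) * E"
    using c by (intro mult_minus_distrib_mat[of _ N N]) auto
  moreover have "(Q - E) * Q = Q * Q - E * Q"
    using c by (intro minus_mult_distrib_mat[of _ N N]) auto
  moreover have "(Q - E) * E = Q * E - E * E"
    using c by (intro minus_mult_distrib_mat[of _ N N]) auto
  moreover have "Q - E \<in> carrier_mat N N" using c by (simp add: minus_carrier_mat)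
  ultimately have "(Q - E) * (Q - E) = Q - E"
    using assms c unfolding proj_def by simp
  then show ?thesis using assms c unfolding proj_def by (simp add: adj_minus minus_carrier_mat)
qed

definition fprod :: "nat \<Rightarrow> (nat \<Rightarrow> complex mat) \<Rightarrow> nat list \<Rightarrow> complex mat" where
  "fprod N F xs = foldr (\<lambda>i M. F i * M) xs (1\<^sub>m N)"

lemma assoc3: "A \<in> carrier_mat N N \<Longrightarrow> B \<in> carrier_mat N N \<Longrightarrow> C \<in> carrier_mat N N \<Longrightarrow>
  A * (B * C) = (A * B) * (C :: 'a :: semiring_0 mat)"
  by (simp add: assoc_mult_mat[of _ N N _ N _ N])

lemma fprod_Nil[simp]: "fprod N F [] = 1\<^sub>m N" unfolding fprod_def by simp
lemma fprod_Cons[simp]: "fprod N F (x # xs) = F x * fprod N F xs" unfolding fprod_def by simp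

lemma fprod_carrier: "(\<And>i. i \<in> set xs \<Longrightarrow> F i \<in> carrier_mat N N) \<Longrightarrow> fprod N F xs \<in> carrier_mat N N"
proof (induction xs)
  case (Cons a xs)
  have "F a \<in> carrier_mat N N" using Cons.prems by simp
  moreover have "fprod N F xs \<in> carrier_mat N N" using Cons by simp
  ultimately show ?case by simp
qed simp

lemma fprod_cong: "(\<And>i. i \<in> set xs \<Longrightarrow> F i = F' i) \<Longrightarrow> fprod N F xs = fprod N F' xs"
  by (induction xs) auto

lemma fprod_append:
  assumes "\<And>i. i \<in> set (xs @ [x]) \<Longrightarrow> F i \<in> carrier_mat N N"
  shows "fprod N F (xs @ [x]) = fprod N F xs * F x"
  using assms
proof (induction xs)
  case Nil then show ?case by simp
next
  case (Cons y xs)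
  have "fprod N F (xs @ [x]) = fprod N F xs * F x" using Cons by auto
  moreover have "fprod N F xs \<in> carrier_mat N N" using Cons.prems by (intro fprod_carrier) auto
  ultimately show ?case using Cons.prems by (simp add: assoc_mult_mat[of _ N N _ N _ N])
qed

lemma fprod_comm:
  assumes "\<And>i. i \<in> set xs \<Longrightarrow> F i \<in> carrier_mat N N" "G \<in> carrier_mat N N"
    "\<And>i. i \<in> set xs \<Longrightarrow> G * F i = F i * G"
  shows "G * fprod N F xs = fprod N F xs * G"
  using assms
proof (induction xs)
  case Nil then show ?case by simp
next
  case (Cons x xs)
  have R: "fprod N F xs \<in> carrier_mat N N" using Cons.prems by (intro fprod_carrier) auto
  have Fx: "F x \<in> carrier_mat N N" and GF: "G * F x = F x * G" using Cons.prems by auto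
  have "G * (F x * fprod N F xs) = (G * F x) * fprod N F xs"
    by (rule assoc3[OF Cons.prems(2) Fx R])
  also have "\<dots> = F x * (G * fprod N F xs)"
    unfolding GF by (rule assoc3[OF Fx Cons.prems(2) R, symmetric])
  also have "\<dots> = F x * (fprod N F xs * G)" using Cons by auto
  also have "\<dots> = (F x * fprod N F xs) * G"
    using Fx Cons.prems R by (simp add: assoc_mult_mat[of _ N N _ N _ N])
  finally show ?case by simp
qed

lemma fprod_fix:
  assumes "\<And>i. i \<in> set xs \<Longrightarrow> F i \<in> carrier_mat N N" "G \<in> carrier_mat N N"
    "\<And>i. i \<in> set xs \<Longrightarrow> G * F i = F i * G" "k \<in> set xs" "G * F k = F k"
  shows "G * fprod N F xs = fprod N F xs"
  using assms
proof (induction xs)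
  case Nil then show ?case by simp
next
  case (Cons x xs)
  have R: "fprod N F xs \<in> carrier_mat N N" using Cons.prems by (intro fprod_carrier) auto
  have Fx: "F x \<in> carrier_mat N N" and GF: "G * F x = F x * G" using Cons.prems by auto
  show ?case
  proof (cases "x = k")
    case True
    then show ?thesis using Cons.prems R Fx by (simp add: assoc_mult_mat[of _ N N _ N _ N, symmetric])
  next
    case False
    have "G * (F x * fprod N F xs) = F x * (G * fprod N F xs)"
      unfolding assoc3[OF Cons.prems(2) Fx R] GF by (rule assoc3[OF Fx Cons.prems(2) R, symmetric])
    also have "G * fprod N F xs = fprod N F xs" using Cons False by auto
    finally show ?thesis by simp
  qed
qed

lemma fprod_proj:
  assumes "\<And>i. i \<in> set xs \<Longrightarrow> proj N (F i)"
    "\<And>i j. i \<in> set xs \<Longrightarrow> j \<in> set xs \<Longrightarrow> F i * F j = F j * F i"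
  shows "proj N (fprod N F xs)"
  using assms
proof (induction xs)
  case Nil then show ?case by (simp add: proj_def)
next
  case (Cons x xs)
  have c: "\<And>i. i \<in> set (x # xs) \<Longrightarrow> F i \<in> carrier_mat N N" using Cons.prems unfolding proj_def by auto
  have R: "fprod N F xs \<in> carrier_mat N N" using c by (intro fprod_carrier) auto
  have IH: "proj N (fprod N F xs)" using Cons by auto
  have com: "F x * fprod N F xs = fprod N F xs * F x"
    using Cons.prems c by (intro fprod_comm) auto
  have Fx: "proj N (F x)" using Cons.prems by auto
  have Fxc: "F x \<in> carrier_mat N N" using c by auto
  have "adj (F x * fprod N F xs) = fprod N F xs * F x"
    using IH Fx Fxc R unfolding proj_def by (simp add: adj_mult[of _ N N _ N])
  moreover have "(F x * fprod N F xs) * (F x * fprod N F xs) = F x * fprod N F xs"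
  proof -
    have "(F x * fprod N F xs) * (F x * fprod N F xs) = F x * ((fprod N F xs * F x) * fprod N F xs)"
      using Fxc R by (simp add: assoc_mult_mat[of _ N N _ N _ N])
    also have "\<dots> = (F x * F x) * (fprod N F xs * fprod N F xs)"
      unfolding com[symmetric] using Fxc R by (simp add: assoc_mult_mat[of _ N N _ N _ N])
    finally show ?thesis using IH Fx unfolding proj_def by simp
  qed
  ultimately show ?case using com Fxc R unfolding proj_def by simp
qed

lemma sum_Pow_insert:
  assumes "finite S" "x \<notin> S"
  shows "(\<Sum>A\<in>Pow (insert x S). f A) = (\<Sum>A\<in>Pow S. f A) + (\<Sum>A\<in>Pow S. f (insert x A))"
proof -
  have d: "Pow S \<inter> insert x ` Pow S = {}" using assms by auto
  have i: "inj_on (insert x) (Pow S)" using assms unfolding inj_on_def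
    by (metis Diff_insert_absorb PowD in_mono)
  show ?thesis unfolding Pow_insert using assms d i
    by (simp add: sum.union_disjoint sum.reindex)
qed

lemma tr_expand:
  assumes "distinct xs" "\<And>i. i \<in> set xs \<Longrightarrow> G i \<in> carrier_mat N N" "P \<in> carrier_mat N N"
  shows "tr (P * fprod N (\<lambda>i. (1/2) \<cdot>\<^sub>m (1\<^sub>m N + G i)) xs)
     = (1/2) ^ length xs * (\<Sum>A\<in>Pow (set xs). tr (P * fprod N (\<lambda>i. if i \<in> A then G i else 1\<^sub>m N) xs))"
  using assms
proof (induction xs arbitrary: P)
  case Nil then show ?case by simp
next
  case (Cons x xs)
  define R where "R = fprod N (\<lambda>i. (1/2) \<cdot>\<^sub>m (1\<^sub>m N + G i)) xs"
  define RA where "RA A = fprod N (\<lambda>i. if i \<in> A then G i else 1\<^sub>m N) xs" for A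
  have Gx: "G x \<in> carrier_mat N N" using Cons.prems by auto
  have Rc: "R \<in> carrier_mat N N" unfolding R_def using Cons.prems by (intro fprod_carrier) auto
  have RAc: "RA A \<in> carrier_mat N N" for A unfolding RA_def using Cons.prems by (intro fprod_carrier) auto
  have "P * ((1/2) \<cdot>\<^sub>m (1\<^sub>m N + G x) * R) = (1/2) \<cdot>\<^sub>m (P * R + (P * G x) * R)"
  proof -
    have "(1/2) \<cdot>\<^sub>m (1\<^sub>m N + G x) * R = (1/2) \<cdot>\<^sub>m ((1\<^sub>m N + G x) * R)"
      using Gx Rc by (intro mult_smult_assoc_mat) auto
    also have "(1\<^sub>m N + G x) * R = R + G x * R"
      using Gx Rc by (simp add: add_mult_distrib_mat[of _ N N])
    moreover have Mc: "R + G x * R \<in> carrier_mat N N" using Gx Rc by simp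
    ultimately have "P * ((1/2) \<cdot>\<^sub>m (1\<^sub>m N + G x) * R) = P * ((1/2) \<cdot>\<^sub>m (R + G x * R))"
      by simp
    also have "\<dots> = (1/2) \<cdot>\<^sub>m (P * (R + G x * R))"
      by (rule mult_smult_distrib[OF Cons.prems(3) Mc])
    also have "P * (R + G x * R) = P * R + P * (G x * R)"
      using Gx Rc by (intro mult_add_distrib_mat[OF Cons.prems(3)]) auto
    also have "P * (G x * R) = (P * G x) * R"
      using Gx Rc Cons.prems(3) by (simp add: assoc_mult_mat[of _ N N _ N _ N])
    finally show ?thesis .
  qed
  moreover have "P * R + (P * G x) * R \<in> carrier_mat N N" using Gx Rc Cons.prems(3) by simp
  ultimately have "tr (P * ((1/2) \<cdot>\<^sub>m (1\<^sub>m N + G x) * R)) = (1/2) * tr (P * R + (P * G x) * R)"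
    by (metis tr_smult)
  also have "tr (P * R + (P * G x) * R) = tr (P * R) + tr ((P * G x) * R)"
    using Gx Rc Cons.prems(3) by (intro tr_add) auto
  also have "tr (P * R) = (1/2) ^ length xs * (\<Sum>A\<in>Pow (set xs). tr (P * RA A))"
    unfolding R_def RA_def using Cons by auto
  also have "tr ((P * G x) * R) = (1/2) ^ length xs * (\<Sum>A\<in>Pow (set xs). tr ((P * G x) * RA A))"
    unfolding R_def RA_def using Cons Gx by auto
  finally have L: "tr (P * fprod N (\<lambda>i. (1/2) \<cdot>\<^sub>m (1\<^sub>m N + G i)) (x # xs))
     = (1/2) ^ Suc (length xs) * ((\<Sum>A\<in>Pow (set xs). tr (P * RA A)) + (\<Sum>A\<in>Pow (set xs). tr ((P * G x) * RA A)))"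
    unfolding R_def by (simp add: algebra_simps)
  have x: "x \<notin> set xs" using Cons.prems by auto
  have "(\<Sum>A\<in>Pow (set (x # xs)). tr (P * fprod N (\<lambda>i. if i \<in> A then G i else 1\<^sub>m N) (x # xs)))
     = (\<Sum>A\<in>Pow (set xs). tr (P * fprod N (\<lambda>i. if i \<in> A then G i else 1\<^sub>m N) (x # xs)))
      + (\<Sum>A\<in>Pow (set xs). tr (P * fprod N (\<lambda>i. if i \<in> insert x A then G i else 1\<^sub>m N) (x # xs)))"
    using x by (simp add: sum_Pow_insert)
  also have "(\<Sum>A\<in>Pow (set xs). tr (P * fprod N (\<lambda>i. if i \<in> A then G i else 1\<^sub>m N) (x # xs)))
     = (\<Sum>A\<in>Pow (set xs). tr (P * RA A))"
  proof (intro sum.cong refl)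
    fix A assume "A \<in> Pow (set xs)"
    then have "x \<notin> A" using x by auto
    then show "tr (P * fprod N (\<lambda>i. if i \<in> A then G i else 1\<^sub>m N) (x # xs)) = tr (P * RA A)"
      unfolding RA_def using RAc[of A] RA_def by simp
  qed
  also have "(\<Sum>A\<in>Pow (set xs). tr (P * fprod N (\<lambda>i. if i \<in> insert x A then G i else 1\<^sub>m N) (x # xs)))
     = (\<Sum>A\<in>Pow (set xs). tr ((P * G x) * RA A))"
  proof (intro sum.cong refl)
    fix A assume "A \<in> Pow (set xs)"
    have "fprod N (\<lambda>i. if i \<in> insert x A then G i else 1\<^sub>m N) xs = RA A"
      unfolding RA_def using x by (intro fprod_cong) auto
    then show "tr (P * fprod N (\<lambda>i. if i \<in> insert x A then G i else 1\<^sub>m N) (x # xs)) = tr ((P * G x) * RA A)"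
      using RAc[of A] Gx Cons.prems by (simp add: assoc_mult_mat[of _ N N _ N _ N])
  qed
  finally show ?case using L by simp
qed

lemma smult_mult_smult:
  "A \<in> carrier_mat N N \<Longrightarrow> B \<in> carrier_mat N N \<Longrightarrow> (a \<cdot>\<^sub>m A) * (b \<cdot>\<^sub>m B) = (a * b :: 'a :: comm_ring) \<cdot>\<^sub>m (A * B)"
  by (intro eq_matI) (auto simp: scalar_prod_def sum_distrib_left ac_simps intro!: sum.cong)

lemma uminus_one_mat: "- 1\<^sub>m N = (-1 :: complex) \<cdot>\<^sub>m 1\<^sub>m N"
  by (intro eq_matI) auto

lemma one_mult_sq: "(1\<^sub>m N + M) * (1\<^sub>m N + M) = (2::complex) \<cdot>\<^sub>m (1\<^sub>m N + M)"
  if "M \<in> carrier_mat N N" "M * M = 1\<^sub>m N"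
proof -
  have "(1\<^sub>m N + M) * (1\<^sub>m N + M) = 1\<^sub>m N * (1\<^sub>m N + M) + M * (1\<^sub>m N + M)"
    using that by (intro add_mult_distrib_mat) auto
  also have "M * (1\<^sub>m N + M) = M * 1\<^sub>m N + M * M"
    using that by (intro mult_add_distrib_mat) auto
  finally show ?thesis using that by (intro eq_matI) auto
qed

lemma cmat_dims[simp]: "dim_row (cmat A) = dim_row A" "dim_col (cmat A) = dim_col A"
  unfolding cmat_def by simp_all

lemma cmat_carrier[simp]: "A \<in> carrier_mat nr nc \<Longrightarrow> cmat A \<in> carrier_mat nr nc"
  unfolding cmat_def by simp

lemma cmat_index[simp]: "i < dim_row A \<Longrightarrow> j < dim_col A \<Longrightarrow> cmat A $$ (i, j) = cnj (A $$ (i, j))"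
  unfolding cmat_def by simp

lemma cmat_mult: "A \<in> carrier_mat nr k \<Longrightarrow> B \<in> carrier_mat k nc \<Longrightarrow> cmat (A * B) = cmat A * cmat B"
  by (intro eq_matI) (auto simp: scalar_prod_def)

lemma cmat_add: "A \<in> carrier_mat nr nc \<Longrightarrow> B \<in> carrier_mat nr nc \<Longrightarrow> cmat (A + B) = cmat A + cmat B"
  by (intro eq_matI) auto

lemma cmat_smult: "cmat (c \<cdot>\<^sub>m A) = cnj c \<cdot>\<^sub>m cmat A"
  by (intro eq_matI) auto

lemma cmat_one[simp]: "cmat (1\<^sub>m N) = 1\<^sub>m N"
  by (intro eq_matI) auto

lemma cmat_adj: "cmat (adj A) = adj (cmat A)"
  by (intro eq_matI) auto

lemma mat_eq_vecs:
  assumes "(A :: 'a :: semiring_1 mat) \<in> carrier_mat nr nc" "B \<in> carrier_mat nr nc"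
    "\<And>v. v \<in> carrier_vec nc \<Longrightarrow> A *\<^sub>v v = B *\<^sub>v v"
  shows "A = B"
proof (rule eq_matI)
  fix i j assume ij: "i < dim_row B" "j < dim_col B"
  have ij': "i < nr" "j < nc" using ij assms by auto
  have "(A *\<^sub>v unit_vec nc j) $ i = (B *\<^sub>v unit_vec nc j) $ i" using assms(3)[of "unit_vec nc j"] by simp
  moreover have "(A *\<^sub>v unit_vec nc j) $ i = A $$ (i, j)" using assms(1) ij' by simp
  moreover have "(B *\<^sub>v unit_vec nc j) $ i = B $$ (i, j)" using assms(2) ij' by simp
  ultimately show "A $$ (i, j) = B $$ (i, j)" by simp
qed (use assms in auto)

definition mv :: "complex mat \<Rightarrow> (nat \<Rightarrow> complex) \<Rightarrow> nat \<Rightarrow> complex" where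
  "mv M x i = (\<Sum>k<dim_col M. M $$ (i, k) * x k)"

definition ip :: "nat \<Rightarrow> (nat \<Rightarrow> complex) \<Rightarrow> (nat \<Rightarrow> complex) \<Rightarrow> complex" where
  "ip N x y = (\<Sum>i<N. cnj (x i) * y i)"

definition op :: "nat \<Rightarrow> (nat \<Rightarrow> complex) \<Rightarrow> (nat \<Rightarrow> complex) \<Rightarrow> complex mat" where
  "op N x y = mat N N (\<lambda>(i, j). x i * cnj (y j))"

definition Tf :: "complex mat \<Rightarrow> (nat \<Rightarrow> complex) \<Rightarrow> nat \<Rightarrow> complex" where
  "Tf Y x i = cnj (mv Y x i)"

lemma op_carrier[simp]: "op N x y \<in> carrier_mat N N" unfolding op_def by simp
lemma op_dims[simp]: "dim_row (op N x y) = N" "dim_col (op N x y) = N" unfolding op_def by simp_all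
lemma op_index[simp]: "i < N \<Longrightarrow> j < N \<Longrightarrow> op N x y $$ (i, j) = x i * cnj (y j)"
  unfolding op_def by simp

lemma op_cong: "(\<And>i. i < N \<Longrightarrow> x i = x' i) \<Longrightarrow> (\<And>i. i < N \<Longrightarrow> y i = y' i) \<Longrightarrow> op N x y = op N x' y'"
  by (intro eq_matI) auto

lemma ip_cong: "(\<And>i. i < N \<Longrightarrow> x i = x' i) \<Longrightarrow> (\<And>i. i < N \<Longrightarrow> y i = y' i) \<Longrightarrow> ip N x y = ip N x' y'"
  unfolding ip_def by (intro sum.cong) auto

lemma mv_cong: "M \<in> carrier_mat N N \<Longrightarrow> (\<And>i. i < N \<Longrightarrow> x i = x' i) \<Longrightarrow> mv M x i = mv M x' i"
  unfolding mv_def by (intro sum.cong) auto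




lemma adj_op: "adj (op N x y) = op N y x"
  by (intro eq_matI) auto

lemma tr_op: "tr (op N x y) = ip N y x"
  unfolding tr_def ip_def by (simp add: ac_simps)

lemma ip_cnj: "ip N y x = cnj (ip N x y)"
  unfolding ip_def by (simp add: ac_simps)

lemma ip_scale_r: "ip N x (\<lambda>i. c * y i) = c * ip N x y"
  unfolding ip_def by (simp add: sum_distrib_left ac_simps)

lemma ip_scale_l: "ip N (\<lambda>i. c * x i) y = cnj c * ip N x y"
  unfolding ip_def by (simp add: sum_distrib_left ac_simps)

lemma ip_neg_l: "ip N (\<lambda>i. - x i) y = - ip N x y"
  unfolding ip_def by (simp add: sum_negf)

lemma ip_mv: "M \<in> carrier_mat N N \<Longrightarrow> ip N x (mv M y) = ip N (mv (adj M) x) y"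
proof -
  assume M: "M \<in> carrier_mat N N"
  have "ip N x (mv M y) = (\<Sum>i<N. \<Sum>k<N. cnj (x i) * M $$ (i, k) * y k)"
    unfolding ip_def mv_def using M by (simp add: sum_distrib_left ac_simps)
  also have "\<dots> = (\<Sum>k<N. \<Sum>i<N. cnj (x i) * M $$ (i, k) * y k)" by (rule sum.swap)
  also have "\<dots> = (\<Sum>k<N. (\<Sum>i<N. cnj (x i) * M $$ (i, k)) * y k)"
    by (simp add: sum_distrib_right)
  also have "\<dots> = ip N (mv (adj M) x) y"
    unfolding ip_def mv_def using M by (intro sum.cong refl) (simp add: ac_simps)
  finally show ?thesis .
qed

lemma mv_mult: "A \<in> carrier_mat N N \<Longrightarrow> B \<in> carrier_mat N N \<Longrightarrow> i < N \<Longrightarrow> mv (A * B) x i = mv A (mv B x) i"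
proof -
  assume c: "A \<in> carrier_mat N N" "B \<in> carrier_mat N N" "i < N"
  have "mv (A * B) x i = (\<Sum>k<N. \<Sum>l<N. A $$ (i, l) * B $$ (l, k) * x k)"
    unfolding mv_def using c by (simp add: scalar_prod_def sum_distrib_right lessThan_atLeast0)
  also have "\<dots> = (\<Sum>l<N. \<Sum>k<N. A $$ (i, l) * B $$ (l, k) * x k)" by (rule sum.swap)
  also have "\<dots> = mv A (mv B x) i"
    unfolding mv_def using c by (simp add: sum_distrib_left ac_simps)
  finally show ?thesis .
qed

lemma mv_one: "i < N \<Longrightarrow> mv (1\<^sub>m N) x i = x i"
proof -
  assume i: "i < N"
  have "mv (1\<^sub>m N) x i = (\<Sum>k<N. if k = i then x k else 0)"
    unfolding mv_def using i by (intro sum.cong) auto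
  then show ?thesis using i by simp
qed

lemma mv_add: "A \<in> carrier_mat N N \<Longrightarrow> B \<in> carrier_mat N N \<Longrightarrow> i < N \<Longrightarrow> mv (A + B) x i = mv A x i + mv B x i"
  unfolding mv_def by (simp add: sum.distrib distrib_right)

lemma mv_smult: "A \<in> carrier_mat N N \<Longrightarrow> i < N \<Longrightarrow> mv (c \<cdot>\<^sub>m A) x i = c * mv A x i"
  unfolding mv_def by (simp add: sum_distrib_left ac_simps)

lemma cnj_mv: "A \<in> carrier_mat N N \<Longrightarrow> i < N \<Longrightarrow> cnj (mv A x i) = mv (cmat A) (\<lambda>k. cnj (x k)) i"
  unfolding mv_def by simp

lemma Tf_scale: "Tf Y (\<lambda>k. c * x k) i = cnj c * Tf Y x i"
  unfolding Tf_def mv_def by (simp add: sum_distrib_left ac_simps)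

lemma Tf_comm:
  assumes c: "M \<in> carrier_mat N N" "Y \<in> carrier_mat N N" and t: "cmat M * Y = Y * M" and i: "i < N"
  shows "mv M (Tf Y x) i = Tf Y (mv M x) i"
proof -
  have "mv M (Tf Y x) i = cnj (mv (cmat M) (mv Y x) i)"
    unfolding Tf_def mv_def using c i by simp
  also have "mv (cmat M) (mv Y x) i = mv (cmat M * Y) x i" using c i by (simp add: mv_mult[of _ N])
  also have "\<dots> = mv Y (mv M x) i" using c i t by (simp add: mv_mult[of _ N])
  finally show ?thesis unfolding Tf_def .
qed

lemma ip_T:
  assumes c: "Y \<in> carrier_mat N N" and u: "adj Y * Y = 1\<^sub>m N"
  shows "ip N (Tf Y x) (Tf Y y) = ip N y x"
proof -
  have "ip N (Tf Y x) (Tf Y y) = ip N (mv Y y) (mv Y x)"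
    unfolding ip_def Tf_def by (simp add: ac_simps)
  also have "\<dots> = ip N y (mv (adj Y) (mv Y x))" using c by (simp add: ip_mv[of "adj Y"])
  also have "\<dots> = ip N y (mv (adj Y * Y) x)" using c by (intro ip_cong) (auto simp: mv_mult[of _ N])
  also have "\<dots> = ip N y x" unfolding u by (intro ip_cong) (auto simp: mv_one)
  finally show ?thesis .
qed

lemma TT:
  assumes c: "Y \<in> carrier_mat N N" and r: "cmat Y = Y" and sq: "Y * Y = - 1\<^sub>m N" and i: "i < N"
  shows "Tf Y (Tf Y x) i = - x i"
proof -
  have "Tf Y (Tf Y x) i = mv (cmat Y) (mv Y x) i"
    unfolding Tf_def using c i by (simp add: cnj_mv[of _ N])
  also have "\<dots> = mv (Y * Y) x i" unfolding r using c i by (simp add: mv_mult[of _ N])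
  also have "mv (Y * Y) x i = mv ((-1) \<cdot>\<^sub>m 1\<^sub>m N) x i" unfolding sq uminus_one_mat ..
  also have "\<dots> = - x i" using i by (simp add: mv_smult[of _ N] mv_one)
  finally show ?thesis .
qed

lemma Tf_cong: "Y \<in> carrier_mat N N \<Longrightarrow> (\<And>i. i < N \<Longrightarrow> x i = x' i) \<Longrightarrow> Tf Y x i = Tf Y x' i"
  unfolding Tf_def mv_def by (auto intro!: sum.cong arg_cong[where f = cnj])

lemma mult_op: "M \<in> carrier_mat N N \<Longrightarrow> M * op N x y = op N (mv M x) y"
  by (intro eq_matI) (auto simp: mv_def scalar_prod_def sum_distrib_right lessThan_atLeast0 mult.assoc)

lemma op_mult: "M \<in> carrier_mat N N \<Longrightarrow> op N x y * M = op N x (mv (adj M) y)"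
  by (intro eq_matI) (auto simp: mv_def scalar_prod_def sum_distrib_left lessThan_atLeast0 ac_simps)

lemma op_op: "op N x y * op N z w = ip N y z \<cdot>\<^sub>m op N x w"
  by (intro eq_matI) (auto simp: ip_def scalar_prod_def sum_distrib_left sum_distrib_right lessThan_atLeast0 mult.assoc mult.left_commute)

lemma proj_unit: assumes P: "proj N P" and t: "tr P \<noteq> 0"
  shows "\<exists>w. (\<forall>i<N. mv P w i = w i) \<and> ip N w w = 1"
proof -
  have c: "P \<in> carrier_mat N N" "adj P = P" "P * P = P" using P unfolding proj_def by auto
  have "\<exists>j<N. P $$ (j, j) \<noteq> 0"
  proof (rule ccontr)
    assume "\<not> (\<exists>j<N. P $$ (j, j) \<noteq> 0)"
    then have "\<forall>j<N. P $$ (j, j) = 0" by blast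
    then have "tr P = 0" unfolding tr_def using c by (auto intro!: sum.neutral)
    then show False using t by simp
  qed
  then obtain j where j: "j < N" "P $$ (j, j) \<noteq> 0" by blast
  define r where "r = (\<Sum>k<N. (cmod (P $$ (k, j)))\<^sup>2)"
  have Pjj: "P $$ (j, j) = of_real r"
  proof -
    have "P $$ (j, j) = (adj P * P) $$ (j, j)" using c by simp
    also have "\<dots> = (\<Sum>k<N. cnj (P $$ (k, j)) * P $$ (k, j))"
      using c(1) j by (simp add: scalar_prod_def lessThan_atLeast0)
    also have "\<dots> = of_real r" unfolding r_def by (simp add: cnj_mult_self)
    finally show ?thesis .
  qed
  have "r \<ge> 0" unfolding r_def by (intro sum_nonneg) auto
  moreover have "r \<noteq> 0" using j Pjj by auto
  ultimately have r: "r > 0" by simp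
  define w where "w i = P $$ (i, j) / of_real (sqrt r)" for i
  have "mv P w i = w i" if i: "i < N" for i
  proof -
    have "mv P w i = (\<Sum>k<N. P $$ (i, k) * P $$ (k, j)) / of_real (sqrt r)"
      unfolding mv_def w_def using c by (simp add: sum_divide_distrib)
    also have "(\<Sum>k<N. P $$ (i, k) * P $$ (k, j)) = (P * P) $$ (i, j)"
      using c(1) i j by (simp add: scalar_prod_def lessThan_atLeast0)
    finally show ?thesis unfolding w_def using c by simp
  qed
  moreover have "ip N w w = 1"
  proof -
    have sq: "complex_of_real (sqrt r) * complex_of_real (sqrt r) = complex_of_real r"
      using r by (simp flip: of_real_mult)
    have "ip N w w = (\<Sum>k<N. cnj (P $$ (k, j)) * P $$ (k, j)) / of_real r"
      unfolding ip_def w_def using r sq by (simp add: sum_divide_distrib power2_eq_square)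
    also have "\<dots> = of_real r / of_real r" by (simp add: cnj_mult_self r_def)
    finally show ?thesis using r by simp
  qed
  ultimately show ?thesis by blast
qed

lemma op_proj: assumes "ip N w w = 1" shows "proj N (op N w w)"
  unfolding proj_def using assms by (simp add: adj_op op_op)

lemma proj_tr_ge1: assumes P: "proj N P" and t: "tr P \<noteq> 0"
  shows "\<exists>r\<ge>1. tr P = of_real r"
proof -
  obtain w where w: "\<forall>i<N. mv P w i = w i" "ip N w w = 1" using proj_unit[OF P t] by blast
  have c: "P \<in> carrier_mat N N" using P unfolding proj_def by auto
  have "P * op N w w = op N w w" unfolding mult_op[OF c] by (rule op_cong) (use w in auto)
  then have "proj N (P - op N w w)" using P op_proj[OF w(2)] by (intro proj_sub)
  then obtain r where r: "r \<ge> 0" "tr (P - op N w w) = of_real r" using proj_tr by blast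
  have "tr (P - op N w w) = tr P - 1" using c w by (simp add: tr_minus[of _ N] tr_op)
  then have "tr P = of_real (r + 1)" using r by simp
  then show ?thesis using r by (intro exI[of _ "r + 1"]) auto
qed

lemma kramers:
  assumes P: "proj N P" and trP: "tr P = 2"
    and Yc: "Y \<in> carrier_mat N N" and Yr: "cmat Y = Y" and Ysq: "Y * Y = - 1\<^sub>m N"
    and Yu: "adj Y * Y = 1\<^sub>m N"
    and PT: "cmat P * Y = Y * P"
    and Bc: "B \<in> carrier_mat N N" and Bh: "adj B = B" and BP: "B * P = B" and PB: "P * B = B"
    and BT: "cmat B * Y = Y * B"
  shows "\<exists>l::real. B = complex_of_real l \<cdot>\<^sub>m P"
proof -
  have Pc: "P \<in> carrier_mat N N" and Ph: "adj P = P" and PP: "P * P = P" using P unfolding proj_def by auto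
  obtain w where w: "\<And>i. i < N \<Longrightarrow> mv P w i = w i" and ww: "ip N w w = 1"
    using proj_unit[OF P] trP by auto
  define v where "v = Tf Y w"
  have vT: "\<And>i. i < N \<Longrightarrow> Tf Y v i = - w i" unfolding v_def using TT[OF Yc Yr Ysq] by blast
  have Pv: "mv P v i = v i" if i: "i < N" for i
  proof -
    have "mv P v i = Tf Y (mv P w) i" unfolding v_def using Tf_comm[OF Pc Yc PT i] .
    also have "\<dots> = Tf Y w i" using Yc w by (intro Tf_cong) auto
    finally show ?thesis unfolding v_def .
  qed
  have vv: "ip N v v = 1" unfolding v_def using ip_T[OF Yc Yu] ww by simp
  have wv: "ip N w v = 0"
  proof -
    have "ip N w v = ip N (Tf Y v) (Tf Y w)" using ip_T[OF Yc Yu, of v w] by simp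
    also have "\<dots> = ip N (\<lambda>i. - w i) v" unfolding v_def[symmetric] using vT by (intro ip_cong) auto
    also have "\<dots> = - ip N w v" by (rule ip_neg_l)
    finally show ?thesis by simp
  qed
  have vw: "ip N v w = 0" using wv ip_cnj[of N v w] by simp
  define E1 where "E1 = op N w w"
  define E2 where "E2 = op N v v"
  have E1p: "proj N E1" unfolding E1_def using op_proj[OF ww] .
  have E2p: "proj N E2" unfolding E2_def using op_proj[OF vv] .
  have E1c: "E1 \<in> carrier_mat N N" and E2c: "E2 \<in> carrier_mat N N" unfolding E1_def E2_def by simp_all
  have PE1: "P * E1 = E1" unfolding E1_def mult_op[OF Pc] by (rule op_cong) (use w in auto)
  have PE2: "P * E2 = E2" unfolding E2_def mult_op[OF Pc] by (rule op_cong) (use Pv in auto)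
  have Q1: "proj N (P - E1)" using proj_sub[OF P E1p PE1] .
  have "(P - E1) * E2 = P * E2 - E1 * E2" using Pc E1c E2c by (rule minus_mult_distrib_mat)
  also have "E1 * E2 = 0\<^sub>m N N" unfolding E1_def E2_def op_op wv by (intro eq_matI) auto
  finally have Q1E2: "(P - E1) * E2 = E2" using PE2 E2c by simp
  have Q2: "proj N (P - E1 - E2)" using proj_sub[OF Q1 E2p Q1E2] .
  have "tr (P - E1 - E2) = tr P - tr E1 - tr E2"
    using Pc E1c E2c by (simp add: tr_minus[of _ N] minus_carrier_mat)
  also have "\<dots> = 0" unfolding trP E1_def E2_def tr_op ww vv by simp
  finally have "P - E1 - E2 = 0\<^sub>m N N" using proj_tr_zero[OF Q2] by simp
  then have Pdec: "P = E1 + E2"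
  proof -
    assume z: "P - E1 - E2 = 0\<^sub>m N N"
    show ?thesis
    proof (rule eq_matI)
      fix i j assume ij: "i < dim_row (E1 + E2)" "j < dim_col (E1 + E2)"
      then have "(P - E1 - E2) $$ (i, j) = 0" using z E2c by simp
      then show "P $$ (i, j) = (E1 + E2) $$ (i, j)" using ij Pc E1c E2c by (simp add: algebra_simps)
    qed (use Pc E1c E2c in auto)
  qed
  define Bw where "Bw = mv B w"
  define a where "a = ip N w Bw"
  define b where "b = ip N v Bw"
  have Bw_dec: "Bw i = a * w i + b * v i" if i: "i < N" for i
  proof -
    have "Bw i = mv (P * B) w i" unfolding PB Bw_def ..
    also have "\<dots> = mv P Bw i" unfolding Bw_def using Pc Bc i by (simp add: mv_mult[of _ N])
    also have "\<dots> = mv E1 Bw i + mv E2 Bw i" unfolding Pdec using E1c E2c i by (simp add: mv_add[of _ N])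
    also have "\<dots> = a * w i + b * v i"
      unfolding E1_def E2_def a_def b_def mv_def using i by (simp add: ip_def sum_distrib_left ac_simps)
    finally show ?thesis .
  qed
  have BTw: "mv B v i = Tf Y Bw i" if i: "i < N" for i
    unfolding v_def Bw_def using Tf_comm[OF Bc Yc BT i] .
  have b0: "b = 0"
  proof -
    have "b = ip N (mv (adj B) v) w" unfolding b_def Bw_def using ip_mv[OF Bc] by simp
    also have "\<dots> = ip N (Tf Y Bw) w" unfolding Bh using BTw by (intro ip_cong) auto
    also have "\<dots> = ip N (Tf Y Bw) (\<lambda>i. - Tf Y v i)" using vT by (intro ip_cong) auto
    also have "\<dots> = - ip N (Tf Y Bw) (Tf Y v)"
      by (simp add: ip_def sum_negf)
    also have "\<dots> = - b" unfolding b_def using ip_T[OF Yc Yu] by simp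
    finally show ?thesis by simp
  qed
  have areal: "cnj a = a"
  proof -
    have "a = ip N (mv (adj B) w) w" unfolding a_def Bw_def using ip_mv[OF Bc] by simp
    also have "\<dots> = ip N Bw w" unfolding Bh Bw_def ..
    also have "\<dots> = cnj a" unfolding a_def by (rule ip_cnj)
    finally show ?thesis by simp
  qed
  have Bw': "Bw i = a * w i" if "i < N" for i using Bw_dec[OF that] b0 by simp
  have Bv': "mv B v i = a * v i" if i: "i < N" for i
  proof -
    have "mv B v i = Tf Y Bw i" using BTw[OF i] .
    also have "\<dots> = Tf Y (\<lambda>k. a * w k) i" using Yc Bw' by (intro Tf_cong) auto
    also have "\<dots> = a * v i" unfolding Tf_scale v_def areal ..
    finally show ?thesis .
  qed
  have "B = B * E1 + B * E2" using BP Pdec Bc E1c E2c by (metis mult_add_distrib_mat)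
  also have "B * E1 = op N (\<lambda>i. a * w i) w"
    unfolding E1_def mult_op[OF Bc] by (rule op_cong) (use Bw' Bw_def in auto)
  also have "B * E2 = op N (\<lambda>i. a * v i) v"
    unfolding E2_def mult_op[OF Bc] by (rule op_cong) (use Bv' in auto)
  also have "op N (\<lambda>i. a * w i) w + op N (\<lambda>i. a * v i) v = a \<cdot>\<^sub>m P"
    unfolding Pdec E1_def E2_def by (intro eq_matI) (auto simp: distrib_left)
  finally have "B = complex_of_real (Re a) \<cdot>\<^sub>m P" using areal by (metis Reals_cnj_iff complex_is_Real_iff of_real_Re)
  then show ?thesis by blast
qed

section \<open>The stabilizer setting\<close>

locale qcode =
  fixes n m :: nat and g :: "nat \<Rightarrow> complex mat"
  assumes m_def: "Suc m = n"
    and gens: "stabilizer_generators n m g"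
    and even_weight: "\<forall>M \<in> stab_group n m g. \<forall>c p.
        c \<in> phases \<and> M = c \<cdot>\<^sub>m pauli_mat n p \<longrightarrow> even (pauli_weight n p)"
begin

abbreviation "N \<equiv> (2::nat) ^ n"
abbreviation "S \<equiv> stab_group n m g"

lemma S_def': "S = gen_group n (g ` {..<m})" unfolding stab_group_def ..

lemma sq_mult_carrier[simp]: "A \<in> carrier_mat N N \<Longrightarrow> B \<in> carrier_mat N N \<Longrightarrow> A * B \<in> carrier_mat N N"
  by (rule mult_carrier_mat)

lemma sq_mult_add: "A \<in> carrier_mat N N \<Longrightarrow> B \<in> carrier_mat N N \<Longrightarrow> C \<in> carrier_mat N N \<Longrightarrow>
  A * (B + C) = A * B + A * (C :: complex mat)"
  by (rule mult_add_distrib_mat) auto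

lemma sq_add_mult: "A \<in> carrier_mat N N \<Longrightarrow> B \<in> carrier_mat N N \<Longrightarrow> C \<in> carrier_mat N N \<Longrightarrow>
  (A + B) * C = A * C + B * (C :: complex mat)"
  by (rule add_mult_distrib_mat) auto

lemma sq_mult_minus: "A \<in> carrier_mat N N \<Longrightarrow> B \<in> carrier_mat N N \<Longrightarrow> C \<in> carrier_mat N N \<Longrightarrow>
  A * (B - C) = A * B - A * (C :: complex mat)"
  by (rule mult_minus_distrib_mat) auto

lemma sq_minus_mult: "A \<in> carrier_mat N N \<Longrightarrow> B \<in> carrier_mat N N \<Longrightarrow> C \<in> carrier_mat N N \<Longrightarrow>
  (A - B) * C = A * C - B * (C :: complex mat)"
  by (rule minus_mult_distrib_mat) auto

lemma sq_mult_smult: "A \<in> carrier_mat N N \<Longrightarrow> B \<in> carrier_mat N N \<Longrightarrow>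
  A * (k \<cdot>\<^sub>m B) = k \<cdot>\<^sub>m (A * (B :: complex mat))"
  by (rule mult_smult_distrib) auto

lemma sq_smult_mult: "A \<in> carrier_mat N N \<Longrightarrow> B \<in> carrier_mat N N \<Longrightarrow>
  (k \<cdot>\<^sub>m A) * B = k \<cdot>\<^sub>m (A * (B :: complex mat))"
  by (rule mult_smult_assoc_mat) auto

lemma sq_assoc: "A \<in> carrier_mat N N \<Longrightarrow> B \<in> carrier_mat N N \<Longrightarrow> C \<in> carrier_mat N N \<Longrightarrow>
  (A * B) * C = A * (B * (C :: complex mat))"
  by (rule assoc_mult_mat) auto

lemma sq_tr_smult: "A \<in> carrier_mat N N \<Longrightarrow> tr (k \<cdot>\<^sub>m A) = k * tr A"
  by (rule tr_smult)

lemma sq_tr_add: "A \<in> carrier_mat N N \<Longrightarrow> B \<in> carrier_mat N N \<Longrightarrow> tr (A + B) = tr A + tr B"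
  by (rule tr_add)

lemma sq_tr_minus: "A \<in> carrier_mat N N \<Longrightarrow> B \<in> carrier_mat N N \<Longrightarrow> tr (A - B) = tr A - tr B"
  by (rule tr_minus)

lemma sq_adj_mult: "A \<in> carrier_mat N N \<Longrightarrow> B \<in> carrier_mat N N \<Longrightarrow> adj (A * B) = adj B * adj A"
  by (rule adj_mult) auto

lemmas sq_simps = sq_mult_add sq_add_mult sq_mult_smult sq_smult_mult sq_tr_smult sq_tr_add

lemma gens_pauli: "i < m \<Longrightarrow> g i \<in> pauli_ops n"
  using gens unfolding stabilizer_generators_def by auto

lemma gens_comm: "i < m \<Longrightarrow> j < m \<Longrightarrow> g i * g j = g j * g i"
  using gens unfolding stabilizer_generators_def by auto

lemma minus_one_notin: "- 1\<^sub>m N \<notin> S"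
  using gens unfolding stabilizer_generators_def by auto

lemma indep: "A \<subseteq> {..<m} \<Longrightarrow> prod_subset n m g A = 1\<^sub>m N \<Longrightarrow> A = {}"
  using gens unfolding stabilizer_generators_def by auto

lemma g_carrier0: "i < m \<Longrightarrow> g i \<in> carrier_mat N N"
proof -
  assume "i < m"
  then obtain c p where "g i = c \<cdot>\<^sub>m pauli_mat n p" using gens_pauli unfolding pauli_ops_def by blast
  then show ?thesis by simp
qed

lemma one_in_S: "1\<^sub>m N \<in> S" unfolding S_def' by (rule gen_one)

lemma S_carrier: "M \<in> S \<Longrightarrow> M \<in> carrier_mat N N"
  unfolding S_def'
proof (induction rule: gen_group.induct)
  case (gen_mult h M)
  then obtain i where "i < m" "h = g i" by auto
  then show ?case using gen_mult g_carrier0 mult_carrier_mat by metis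
qed simp

lemma g_in_S: "i < m \<Longrightarrow> g i \<in> S"
proof -
  assume i: "i < m"
  have "g i * 1\<^sub>m N \<in> S" unfolding S_def' using i by (intro gen_mult one_in_S[unfolded S_def']) auto
  then show ?thesis using g_carrier0[OF i] by simp
qed

lemma S_gmult: "i < m \<Longrightarrow> M \<in> S \<Longrightarrow> g i * M \<in> S"
  unfolding S_def' by (intro gen_mult) auto

lemma S_mult: assumes "M1 \<in> S" "M2 \<in> S" shows "M1 * M2 \<in> S"
  using assms(1) unfolding S_def'
proof (induction M1 rule: gen_group.induct)
  case gen_one
  show ?case using S_carrier[OF assms(2)] assms(2) S_def' by simp
next
  case (gen_mult h M)
  then obtain i where i: "i < m" "h = g i" by auto
  have "h * M * M2 = h * (M * M2)"
    using i gen_mult S_carrier g_carrier0 assms(2) S_def' by (metis assoc3)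
  then show ?case using gen_mult i S_gmult S_def' by simp
qed

lemma g_form: "i < m \<Longrightarrow> \<exists>c q. c \<in> {1, -1} \<and> g i = c \<cdot>\<^sub>m pauli_mat n q"
proof -
  assume i: "i < m"
  obtain c q where c: "c \<in> phases" "g i = c \<cdot>\<^sub>m pauli_mat n q"
    using gens_pauli[OF i] unfolding pauli_ops_def by auto
  have sq: "g i * g i = (c * c) \<cdot>\<^sub>m 1\<^sub>m N"
    unfolding c(2) by (simp add: smult_mult_smult[of _ N] pauli_sq)
  have "g i * g i \<in> S" using i by (intro S_mult g_in_S)
  moreover have "c \<notin> {1, -1} \<Longrightarrow> c * c = -1" using c(1) unfolding phases_def by auto
  ultimately have "c \<in> {1, -1}" using minus_one_notin sq uminus_one_mat by (metis)
  then show ?thesis using c by auto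
qed

lemma g_sq: "i < m \<Longrightarrow> g i * g i = 1\<^sub>m N"
proof -
  assume i: "i < m"
  obtain c q where c: "c \<in> {1, -1}" "g i = c \<cdot>\<^sub>m pauli_mat n q" using g_form[OF i] by blast
  have "g i * g i = (c * c) \<cdot>\<^sub>m 1\<^sub>m N"
    unfolding c(2) by (simp add: smult_mult_smult[of _ N] pauli_sq)
  then show ?thesis using c by auto
qed

lemma g_herm: "i < m \<Longrightarrow> adj (g i) = g i"
proof -
  assume i: "i < m"
  obtain c q where c: "c \<in> {1, -1}" "g i = c \<cdot>\<^sub>m pauli_mat n q" using g_form[OF i] by blast
  show ?thesis unfolding c(2) adj_smult pauli_adj using c by auto
qed

lemma S_pauli: "M \<in> S \<Longrightarrow> \<exists>c q. c \<in> phases \<and> M = c \<cdot>\<^sub>m pauli_mat n q"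
  unfolding S_def'
proof (induction M rule: gen_group.induct)
  case gen_one
  have "1\<^sub>m N = 1 \<cdot>\<^sub>m pauli_mat n (\<lambda>_. PI)" by (simp add: pauli_I)
  moreover have "(1::complex) \<in> phases" by (simp add: phases_def)
  ultimately show ?case by blast
next
  case (gen_mult h M)
  then obtain i where i: "i < m" "h = g i" by auto
  obtain c q where c: "c \<in> {1, -1}" "g i = c \<cdot>\<^sub>m pauli_mat n q" using g_form[OF i(1)] by blast
  obtain d r where d: "d \<in> phases" "M = d \<cdot>\<^sub>m pauli_mat n r" using gen_mult by blast
  have "h * M = (c * d * (\<Prod>j<n. pph (q j) (r j))) \<cdot>\<^sub>m pauli_mat n (\<lambda>j. pmul (q j) (r j))"
    unfolding i(2) c(2) d(2) by (simp add: smult_mult_smult[of _ N] pauli_mult)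
  moreover have "c * d * (\<Prod>j<n. pph (q j) (r j)) \<in> phases"
    using c(1) d(1) by (intro phases_mult prod_phases pph_phases) (auto simp: phases_def)
  ultimately show ?case by blast
qed

lemma S_fix_gen: "set xs \<subseteq> {..<m} \<Longrightarrow> fprod N (\<lambda>i. if i \<in> A then g i else 1\<^sub>m N) xs \<in> S"
proof (induction xs)
  case Nil then show ?case using one_in_S by simp
next
  case (Cons x xs)
  then have R: "fprod N (\<lambda>i. if i \<in> A then g i else 1\<^sub>m N) xs \<in> S" by auto
  show ?case using Cons.prems R S_carrier[OF R] by (auto intro: S_gmult)
qed

lemma prod_subset_S: "prod_subset n m g A \<in> S"
proof -
  have "prod_subset n m g A = fprod N (\<lambda>i. if i \<in> A then g i else 1\<^sub>m N) [0..<m]"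
    unfolding prod_subset_def fprod_def ..
  moreover have "set [0..<m] \<subseteq> {..<m}" by auto
  ultimately show ?thesis using S_fix_gen[of "[0..<m]"] by simp
qed


definition Fg :: "bool list \<Rightarrow> nat \<Rightarrow> complex mat" where
  "Fg s i = (1 / 2 :: complex) \<cdot>\<^sub>m (1\<^sub>m N + (if s ! i then -1 else 1 :: complex) \<cdot>\<^sub>m g i)"

lemma sp_fprod: "syndrome_proj n m g s = fprod N (Fg s) [0..<m]"
  unfolding syndrome_proj_def fprod_def Fg_def ..

lemma Fg_carrier: "i < m \<Longrightarrow> Fg s i \<in> carrier_mat N N"
  unfolding Fg_def using g_carrier0 by simp

lemma sp_carrier: "syndrome_proj n m g s \<in> carrier_mat N N"
  unfolding sp_fprod by (rule fprod_carrier) (auto simp: Fg_carrier)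

lemma Fg_proj: assumes i: "i < m" shows "proj N (Fg s i)"
proof -
  define e :: complex where "e = (if s ! i then -1 else 1)"
  have e2: "e * e = 1" unfolding e_def by auto
  have ec: "cnj e = e" unfolding e_def by auto
  have gc: "g i \<in> carrier_mat N N" using g_carrier0[OF i] .
  have M: "(e \<cdot>\<^sub>m g i) * (e \<cdot>\<^sub>m g i) = 1\<^sub>m N"
    using gc g_sq[OF i] e2 by (simp add: smult_mult_smult[of _ N])
  have X: "(1\<^sub>m N + e \<cdot>\<^sub>m g i) * (1\<^sub>m N + e \<cdot>\<^sub>m g i) = 2 \<cdot>\<^sub>m (1\<^sub>m N + e \<cdot>\<^sub>m g i)"
    using gc M by (intro one_mult_sq) auto
  have "Fg s i * Fg s i = (1/2 * (1/2)) \<cdot>\<^sub>m ((1\<^sub>m N + e \<cdot>\<^sub>m g i) * (1\<^sub>m N + e \<cdot>\<^sub>m g i))"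
    unfolding Fg_def e_def[symmetric] using gc by (intro smult_mult_smult) auto
  also have "\<dots> = Fg s i" unfolding X Fg_def e_def[symmetric] by simp
  finally have idem: "Fg s i * Fg s i = Fg s i" .
  have "adj (Fg s i) = Fg s i"
    unfolding Fg_def e_def[symmetric] using gc ec g_herm[OF i]
    by (simp add: adj_smult adj_add[of _ N N])
  then show ?thesis using idem Fg_carrier[OF i] unfolding proj_def by simp
qed

lemma one_plus_mult: "(X :: complex mat) \<in> carrier_mat N N \<Longrightarrow> Y \<in> carrier_mat N N \<Longrightarrow>
   (1\<^sub>m N + X) * (1\<^sub>m N + Y) = 1\<^sub>m N + X + Y + X * Y"
proof -
  assume c: "X \<in> carrier_mat N N" "Y \<in> carrier_mat N N"
  have "(1\<^sub>m N + X) * (1\<^sub>m N + Y) = 1\<^sub>m N * (1\<^sub>m N + Y) + X * (1\<^sub>m N + Y)"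
    using c by (intro add_mult_distrib_mat) auto
  also have "X * (1\<^sub>m N + Y) = X * 1\<^sub>m N + X * Y"
    using c by (intro mult_add_distrib_mat) auto
  also have "1\<^sub>m N * (1\<^sub>m N + Y) = 1\<^sub>m N + Y" by (rule left_mult_one_mat[of _ N N]) (use c in simp)
  also have "X * 1\<^sub>m N = X" using c by simp
  finally show ?thesis using c by (intro eq_matI) auto
qed

lemma aff_comm:
  assumes c: "A \<in> carrier_mat N N" "B \<in> carrier_mat N N" and AB: "A * B = B * A"
  shows "(a \<cdot>\<^sub>m (1\<^sub>m N + c \<cdot>\<^sub>m A)) * (b \<cdot>\<^sub>m (1\<^sub>m N + d \<cdot>\<^sub>m B))
       = (b \<cdot>\<^sub>m (1\<^sub>m N + d \<cdot>\<^sub>m B)) * (a \<cdot>\<^sub>m (1\<^sub>m N + (c::complex) \<cdot>\<^sub>m A))"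
proof -
  have "(a \<cdot>\<^sub>m (1\<^sub>m N + c \<cdot>\<^sub>m A)) * (b \<cdot>\<^sub>m (1\<^sub>m N + d \<cdot>\<^sub>m B))
      = (a * b) \<cdot>\<^sub>m (1\<^sub>m N + c \<cdot>\<^sub>m A + d \<cdot>\<^sub>m B + (c * d) \<cdot>\<^sub>m (A * B))"
    using c by (simp add: smult_mult_smult[of _ N] one_plus_mult)
  moreover have "(b \<cdot>\<^sub>m (1\<^sub>m N + d \<cdot>\<^sub>m B)) * (a \<cdot>\<^sub>m (1\<^sub>m N + c \<cdot>\<^sub>m A))
      = (b * a) \<cdot>\<^sub>m (1\<^sub>m N + d \<cdot>\<^sub>m B + c \<cdot>\<^sub>m A + (d * c) \<cdot>\<^sub>m (B * A))"
    using c by (simp add: smult_mult_smult[of _ N] one_plus_mult)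
  ultimately show ?thesis using c AB by (intro eq_matI) (auto simp: ac_simps)
qed

lemma aff_comm1:
  assumes c: "A \<in> carrier_mat N N" "B \<in> carrier_mat N N" and AB: "A * B = B * A"
  shows "A * (b \<cdot>\<^sub>m (1\<^sub>m N + d \<cdot>\<^sub>m B)) = (b \<cdot>\<^sub>m (1\<^sub>m N + (d::complex) \<cdot>\<^sub>m B)) * A"
proof -
  have "A * (b \<cdot>\<^sub>m (1\<^sub>m N + d \<cdot>\<^sub>m B)) = b \<cdot>\<^sub>m (A * 1\<^sub>m N + A * (d \<cdot>\<^sub>m B))"
    using c by (simp add: sq_simps)
  moreover have "(b \<cdot>\<^sub>m (1\<^sub>m N + d \<cdot>\<^sub>m B)) * A = b \<cdot>\<^sub>m (1\<^sub>m N * A + (d \<cdot>\<^sub>m B) * A)"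
    using c by (simp add: sq_simps)
  ultimately show ?thesis using c AB
    by (simp add: sq_simps)
qed

lemma Fg_comm: "i < m \<Longrightarrow> j < m \<Longrightarrow> Fg s i * Fg t j = Fg t j * Fg s i"
  unfolding Fg_def by (intro aff_comm g_carrier0 gens_comm)

lemma sp_proj: "proj N (syndrome_proj n m g s)"
  unfolding sp_fprod by (rule fprod_proj) (auto simp: Fg_proj Fg_comm)

lemma g_comm_Fg: "i < m \<Longrightarrow> j < m \<Longrightarrow> g i * Fg s j = Fg s j * g i"
  unfolding Fg_def by (rule aff_comm1) (auto intro: g_carrier0 gens_comm)

lemma g_comm_sp: "i < m \<Longrightarrow> g i * syndrome_proj n m g s = syndrome_proj n m g s * g i"
  unfolding sp_fprod
  by (rule fprod_comm) (auto simp: Fg_carrier g_carrier0 g_comm_Fg)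

abbreviation "P0 \<equiv> syndrome_proj n m g (replicate m False)"

lemma g_P0: assumes i: "i < m" shows "g i * P0 = P0"
proof -
  have gc: "g i \<in> carrier_mat N N" using g_carrier0[OF i] .
  have "g i * Fg (replicate m False) i = Fg (replicate m False) i"
  proof -
    have "g i * Fg (replicate m False) i = (1/2) \<cdot>\<^sub>m (g i * 1\<^sub>m N + g i * g i)"
      unfolding Fg_def using i gc
      by (simp add: sq_simps)
    then show ?thesis unfolding Fg_def using i gc g_sq[OF i] by (intro eq_matI) auto
  qed
  then show ?thesis unfolding sp_fprod using i
    by (intro fprod_fix[of _ _ _ _ i]) (auto simp: Fg_carrier gc g_comm_Fg)
qed

lemma P0_g: assumes i: "i < m" shows "P0 * g i = P0"
proof -
  have "adj (g i * P0) = P0" using g_P0[OF i] sp_proj unfolding proj_def by simp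
  then show ?thesis using g_herm[OF i] sp_proj sp_carrier g_carrier0[OF i] unfolding proj_def
    by (simp add: adj_mult[of _ N N _ N])
qed

lemma S_P0: "M \<in> S \<Longrightarrow> M * P0 = P0"
  unfolding S_def'
proof (induction rule: gen_group.induct)
  case gen_one then show ?case using sp_carrier[of "replicate m False"] by simp
next
  case (gen_mult h M)
  then obtain i where i: "i < m" "h = g i" by auto
  have "h * M * P0 = h * (M * P0)"
    using i gen_mult S_carrier g_carrier0 sp_carrier S_def' by (metis assoc3)
  then show ?case using gen_mult i g_P0 by simp
qed

lemma P0_expand: assumes P: "P \<in> carrier_mat N N"
  shows "tr (P * P0) = (1/2) ^ m * (\<Sum>A\<in>Pow {0..<m}. tr (P * prod_subset n m g A))"
proof -
  have "P0 = fprod N (\<lambda>i. (1/2) \<cdot>\<^sub>m (1\<^sub>m N + g i)) [0..<m]"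
    unfolding sp_fprod by (intro fprod_cong) (auto simp: Fg_def)
  moreover have "prod_subset n m g A = fprod N (\<lambda>i. if i \<in> A then g i else 1\<^sub>m N) [0..<m]" for A
    unfolding prod_subset_def fprod_def ..
  ultimately show ?thesis using tr_expand[of "[0..<m]" g N P] P g_carrier0 by simp
qed

lemma tr_pauli_S: assumes M: "M \<in> S" and nt: "\<forall>c\<in>phases. c \<cdot>\<^sub>m pauli_mat n p \<notin> S"
  shows "tr (pauli_mat n p * M) = 0"
proof -
  obtain c q where c: "c \<in> phases" "M = c \<cdot>\<^sub>m pauli_mat n q" using S_pauli[OF M] by blast
  have "tr (pauli_mat n p * M) = c * ((\<Prod>j<n. pph (p j) (q j)) * tr (pauli_mat n (\<lambda>j. pmul (p j) (q j))))"
    unfolding c(2) by (simp add: mult_smult_distrib[of _ N N _ N] pauli_mult tr_smult[of _ N])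
  moreover have "\<not> (\<forall>j<n. pmul (p j) (q j) = PI)"
  proof
    assume "\<forall>j<n. pmul (p j) (q j) = PI"
    then have "pauli_mat n p = pauli_mat n q" by (intro pauli_eq) (auto simp: pmul_I_iff)
    then show False using nt c M by auto
  qed
  ultimately show ?thesis by (simp add: pauli_trace)
qed

lemma tr_P0_nontriv: assumes nt: "\<forall>c\<in>phases. c \<cdot>\<^sub>m pauli_mat n p \<notin> S"
  shows "tr (pauli_mat n p * P0) = 0"
  unfolding P0_expand[OF pauli_carrier] using tr_pauli_S[OF prod_subset_S nt] by simp

lemma tr_P0: "tr P0 = 2"
proof -
  have "tr (prod_subset n m g A) = 0" if A: "A \<in> Pow {0..<m}" "A \<noteq> {}" for A
  proof -
    obtain c q where c: "c \<in> phases" "prod_subset n m g A = c \<cdot>\<^sub>m pauli_mat n q"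
      using S_pauli[OF prod_subset_S] by blast
    show ?thesis
    proof (cases "\<forall>j<n. q j = PI")
      case False
      then show ?thesis unfolding c(2) by (auto simp: tr_smult[of _ N] pauli_trace)
    next
      case True
      then have pc: "prod_subset n m g A = c \<cdot>\<^sub>m 1\<^sub>m N" unfolding c(2) by (simp add: pauli_I)
      have "c \<noteq> 1" using indep[of A] A pc by (auto simp: atLeast0LessThan)
      moreover have "c \<noteq> -1" using pc prod_subset_S[of A] minus_one_notin uminus_one_mat by metis
      moreover have "c * c \<noteq> -1"
      proof
        assume cc: "c * c = -1"
        have "(c \<cdot>\<^sub>m 1\<^sub>m N) * (c \<cdot>\<^sub>m 1\<^sub>m N) = (c * c) \<cdot>\<^sub>m (1\<^sub>m N * 1\<^sub>m N)"
          by (rule smult_mult_smult) auto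
        then have "- 1\<^sub>m N \<in> S" using S_mult[OF prod_subset_S prod_subset_S, of A A] pc cc uminus_one_mat
          by simp
        then show False using minus_one_notin by simp
      qed
      ultimately show ?thesis using c(1) unfolding phases_def by auto
    qed
  qed
  moreover have "prod_subset n m g {} = 1\<^sub>m N"
  proof -
    have "prod_subset n m g {} = fprod N (\<lambda>i. 1\<^sub>m N) [0..<m]"
      unfolding prod_subset_def fprod_def by simp
    moreover have "fprod N (\<lambda>i. 1\<^sub>m N) xs = 1\<^sub>m N" for xs by (induction xs) auto
    ultimately show ?thesis by simp
  qed
  moreover have "1\<^sub>m N * prod_subset n m g A = prod_subset n m g A" for A
    using S_carrier[OF prod_subset_S[of A]] by simp
  ultimately have "(\<Sum>A\<in>Pow {0..<m}. tr (1\<^sub>m N * prod_subset n m g A)) = of_nat N"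
    by (subst sum.remove[of _ "{}"]) (auto intro!: sum.neutral simp: prod_subset_S S_carrier)
  moreover have "1\<^sub>m N * P0 = P0" using sp_carrier[of "replicate m False"] by simp
  ultimately have "tr P0 = (1/2) ^ m * of_nat N"
    using P0_expand[of "1\<^sub>m N"] by simp
  also have "\<dots> = 2" using m_def[symmetric] by (simp add: power_divide)
  finally show ?thesis .
qed


subsection \<open>Sum over syndromes\<close>

lemma sp_fprod_k: "syndrome_proj n k g s = fprod N (Fg s) [0..<k]"
  unfolding syndrome_proj_def fprod_def Fg_def ..

lemma syndromes_Suc: "syndromes (Suc k) = (\<lambda>(t, b). t @ [b]) ` (syndromes k \<times> UNIV)"
proof -
  have "s \<in> (\<lambda>(t, b). t @ [b]) ` (syndromes k \<times> UNIV)" if "length s = Suc k" for s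
  proof -
    have "s = butlast s @ [last s]" using that by (metis append_butlast_last_id list.size(3) nat.distinct(1))
    moreover have "butlast s \<in> syndromes k" using that unfolding syndromes_def by simp
    ultimately show ?thesis by force
  qed
  then show ?thesis unfolding syndromes_def by auto
qed

lemma finite_syndromes: "finite (syndromes k)"
proof -
  have "syndromes k = {xs. set xs \<subseteq> UNIV \<and> length xs = k}" unfolding syndromes_def by simp
  then show ?thesis using finite_lists_length_eq[of "UNIV :: bool set" k] by simp
qed

lemma syn_sum: assumes M: "M \<in> carrier_mat N N"
  shows "k \<le> m \<Longrightarrow> (\<Sum>s\<in>syndromes k. tr (syndrome_proj n k g s * M)) = tr M"
proof (induction k)
  case 0
  have "syndromes 0 = {[]}" unfolding syndromes_def by auto
  then show ?case using M by (simp add: syndrome_proj_def)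
next
  case (Suc k)
  have k: "k < m" using Suc.prems by simp
  have inj: "inj_on (\<lambda>(t, b). t @ [b]) (syndromes k \<times> (UNIV :: bool set))"
    unfolding inj_on_def by auto
  have step: "syndrome_proj n (Suc k) g (t @ [b]) = syndrome_proj n k g t * Fg (t @ [b]) k"
    if t: "t \<in> syndromes k" for t b
  proof -
    have "syndrome_proj n (Suc k) g (t @ [b]) = fprod N (Fg (t @ [b])) ([0..<k] @ [k])"
      unfolding sp_fprod_k by simp
    also have "\<dots> = fprod N (Fg (t @ [b])) [0..<k] * Fg (t @ [b]) k"
      using k by (intro fprod_append) (auto simp: Fg_carrier)
    also have "fprod N (Fg (t @ [b])) [0..<k] = fprod N (Fg t) [0..<k]"
      using t unfolding syndromes_def by (intro fprod_cong) (auto simp: Fg_def nth_append)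
    finally show ?thesis unfolding sp_fprod_k .
  qed
  have FF: "Fg (t @ [True]) k + Fg (t @ [False]) k = 1\<^sub>m N" if t: "t \<in> syndromes k" for t
    using t g_carrier0[OF k] unfolding syndromes_def Fg_def by (intro eq_matI) (auto simp: field_simps)
  have "(\<Sum>s\<in>syndromes (Suc k). tr (syndrome_proj n (Suc k) g s * M))
      = (\<Sum>t\<in>syndromes k. \<Sum>b\<in>UNIV. tr (syndrome_proj n (Suc k) g (t @ [b]) * M))"
    unfolding syndromes_Suc using inj
    by (simp add: sum.reindex sum.cartesian_product split_def)
  also have "\<dots> = (\<Sum>t\<in>syndromes k. tr (syndrome_proj n k g t * M))"
  proof (intro sum.cong refl)
    fix t assume t: "t \<in> syndromes k"
    have c: "syndrome_proj n k g t \<in> carrier_mat N N"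
      unfolding sp_fprod_k using k by (intro fprod_carrier) (auto simp: Fg_carrier)
    have cT: "Fg (t @ [True]) k \<in> carrier_mat N N" "Fg (t @ [False]) k \<in> carrier_mat N N"
      using k by (auto simp: Fg_carrier)
    have "(\<Sum>b\<in>UNIV. tr (syndrome_proj n (Suc k) g (t @ [b]) * M))
        = tr (syndrome_proj n k g t * Fg (t @ [True]) k * M) + tr (syndrome_proj n k g t * Fg (t @ [False]) k * M)"
      using t by (simp add: UNIV_bool step)
    also have "\<dots> = tr (syndrome_proj n k g t * Fg (t @ [True]) k * M + syndrome_proj n k g t * Fg (t @ [False]) k * M)"
      using c cT M by (intro sq_tr_add[symmetric]) auto
    also have "syndrome_proj n k g t * Fg (t @ [True]) k * M + syndrome_proj n k g t * Fg (t @ [False]) k * M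
        = syndrome_proj n k g t * (Fg (t @ [True]) k + Fg (t @ [False]) k) * M"
      using c cT M by (simp add: sq_simps)
    finally show "(\<Sum>b\<in>UNIV. tr (syndrome_proj n (Suc k) g (t @ [b]) * M)) = tr (syndrome_proj n k g t * M)"
      using FF[OF t] c by simp
  qed
  also have "\<dots> = tr M" using Suc by simp
  finally show ?case .
qed

subsection \<open>Time reversal symmetry\<close>

abbreviation "Yp \<equiv> iY_all n"

lemma Yp_def': "Yp = (\<i> ^ n) \<cdot>\<^sub>m pauli_mat n (\<lambda>_. PY)" unfolding iY_all_def ..

lemma Yp_carrier[simp]: "Yp \<in> carrier_mat N N" unfolding Yp_def' by simp

lemma Yp_dims[simp]: "dim_row Yp = N" "dim_col Yp = N" unfolding Yp_def' by simp_all

lemma cmat_Yp: "cmat Yp = Yp"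
proof -
  have "cmat Yp = (cnj (\<i> ^ n) * (-1) ^ n) \<cdot>\<^sub>m pauli_mat n (\<lambda>_. PY)"
    unfolding Yp_def' cmat_smult cmat_Y by simp
  also have "cnj (\<i> ^ n) * (-1) ^ n = \<i> ^ n"
    by (simp add: power_mult_distrib[symmetric])
  finally show ?thesis unfolding Yp_def' .
qed

lemma Yp_sq: "Yp * Yp = (-1) ^ n \<cdot>\<^sub>m 1\<^sub>m N"
proof -
  have "Yp * Yp = (\<i> ^ n * \<i> ^ n) \<cdot>\<^sub>m 1\<^sub>m N"
    unfolding Yp_def' by (simp add: smult_mult_smult[of _ N] pauli_sq)
  also have "\<i> ^ n * \<i> ^ n = ((-1) ^ n :: complex)"
    by (simp add: power_mult_distrib[symmetric])
  finally show ?thesis .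
qed

lemma Yp_unitary: "adj Yp * Yp = 1\<^sub>m N"
proof -
  have "adj Yp * Yp = (cnj (\<i> ^ n) * \<i> ^ n) \<cdot>\<^sub>m 1\<^sub>m N"
    unfolding Yp_def' adj_smult pauli_adj by (simp add: smult_mult_smult[of _ N] pauli_sq)
  also have "cnj (\<i> ^ n) * \<i> ^ n = (1 :: complex)"
    by (simp add: power_mult_distrib[symmetric])
  finally show ?thesis by simp
qed

definition tsym :: "complex mat \<Rightarrow> bool" where
  "tsym M \<longleftrightarrow> cmat M * Yp = Yp * M"

lemma tsym_one: "tsym (1\<^sub>m N)"
  unfolding tsym_def by simp

lemma tsym_mult: assumes "A \<in> carrier_mat N N" "B \<in> carrier_mat N N" "tsym A" "tsym B"
  shows "tsym (A * B)"
proof -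
  have "cmat (A * B) * Yp = cmat A * (cmat B * Yp)"
    using assms by (simp add: cmat_mult[of _ N N] sq_assoc)
  also have "\<dots> = cmat A * (Yp * B)" using assms unfolding tsym_def by simp
  also have "\<dots> = (cmat A * Yp) * B" using assms by (simp add: sq_assoc)
  also have "\<dots> = (Yp * A) * B" using assms unfolding tsym_def by simp
  also have "\<dots> = Yp * (A * B)" using assms by (simp add: sq_assoc)
  finally show ?thesis unfolding tsym_def .
qed

lemma tsym_add: assumes "A \<in> carrier_mat N N" "B \<in> carrier_mat N N" "tsym A" "tsym B"
  shows "tsym (A + B)"
  using assms unfolding tsym_def by (simp add: cmat_add[of _ N N] sq_simps)

lemma tsym_smult: assumes "A \<in> carrier_mat N N" "tsym A" "cnj c = c"
  shows "tsym (c \<cdot>\<^sub>m A)"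
  using assms unfolding tsym_def by (simp add: cmat_smult sq_simps)

lemma tsym_pauli: assumes "even (pauli_weight n p)" shows "tsym (pauli_mat n p)"
proof -
  have s: "(\<Prod>j<n. if p j = PI then 1 else -1 :: complex) = 1"
    unfolding sign_prod using assms unfolding pauli_weight_def by simp
  have "Yp * pauli_mat n p = \<i> ^ n \<cdot>\<^sub>m (pauli_mat n (\<lambda>_. PY) * pauli_mat n p)"
    unfolding Yp_def' by (simp add: sq_simps)
  also have "\<dots> = \<i> ^ n \<cdot>\<^sub>m (cmat (pauli_mat n p) * pauli_mat n (\<lambda>_. PY))"
    unfolding pauli_Y_rel s by simp
  also have "\<dots> = cmat (pauli_mat n p) * Yp"
    unfolding Yp_def' by (simp add: sq_simps)
  finally show ?thesis unfolding tsym_def by simp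
qed

lemma tsym_g: assumes i: "i < m" shows "tsym (g i)"
proof -
  obtain c q where c: "c \<in> {1, -1}" "g i = c \<cdot>\<^sub>m pauli_mat n q" using g_form[OF i] by blast
  have "c \<in> phases" using c(1) by (auto simp: phases_def)
  then have "even (pauli_weight n q)" using even_weight g_in_S[OF i] c(2) by blast
  then show ?thesis unfolding c(2) using c(1) by (intro tsym_smult tsym_pauli) auto
qed

lemma tsym_Fg: "i < m \<Longrightarrow> tsym (Fg s i)"
  unfolding Fg_def using g_carrier0
  by (intro tsym_smult tsym_add tsym_one tsym_g) auto

lemma tsym_fprod: "(\<And>i. i \<in> set xs \<Longrightarrow> F i \<in> carrier_mat N N \<and> tsym (F i)) \<Longrightarrow> tsym (fprod N F xs)"
proof (induction xs)
  case Nil then show ?case by (simp add: tsym_one)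
next
  case (Cons x xs)
  have "fprod N F xs \<in> carrier_mat N N" using Cons.prems by (intro fprod_carrier) auto
  then show ?case using Cons by (auto intro!: tsym_mult)
qed

lemma tsym_sp: "tsym (syndrome_proj n m g s)"
  unfolding sp_fprod by (rule tsym_fprod) (auto simp: Fg_carrier tsym_Fg)

lemma tsym_adj: assumes "A \<in> carrier_mat N N" "tsym A" "adj A * A = 1\<^sub>m N" "A * adj A = 1\<^sub>m N"
  shows "tsym (adj A)"
proof -
  have c1: "cmat (adj A) \<in> carrier_mat N N" "adj A \<in> carrier_mat N N" using assms(1) by simp_all
  have "cmat (adj A) * Yp = cmat (adj A) * Yp * (A * adj A)" using assms by simp
  also have "\<dots> = cmat (adj A) * (Yp * A) * adj A" using assms(1) c1
    by (simp add: sq_assoc[of "cmat (adj A)"] sq_assoc[of Yp] sq_assoc[of "cmat (adj A) * Yp"])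
  also have "\<dots> = cmat (adj A) * (cmat A * Yp) * adj A" using assms unfolding tsym_def by simp
  also have "\<dots> = (cmat (adj A) * cmat A) * Yp * adj A" using assms(1) c1 by (simp add: sq_assoc)
  also have "cmat (adj A) * cmat A = cmat (adj A * A)" using assms(1) by (simp add: cmat_mult[of _ N N])
  also have "\<dots> = 1\<^sub>m N" using assms by simp
  also have "1\<^sub>m N * Yp * adj A = Yp * adj A" by simp
  finally show ?thesis unfolding tsym_def .
qed

lemma tsym_from_vec:
  assumes U: "U \<in> carrier_mat N N"
    and T: "\<forall>v \<in> carrier_vec N. U *\<^sub>v time_rev n v = time_rev n (U *\<^sub>v v)"
  shows "tsym U"
proof -
  have "(cmat U * Yp) *\<^sub>v v = (Yp * U) *\<^sub>v v" if v: "v \<in> carrier_vec N" for v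
  proof (rule eq_vecI)
    fix i assume i: "i < dim_vec ((Yp * U) *\<^sub>v v)"
    then have iN: "i < N" by simp
    have "(U *\<^sub>v time_rev n v) $ i = time_rev n (U *\<^sub>v v) $ i" using T v by simp
    moreover have "(U *\<^sub>v time_rev n v) $ i = cnj (((cmat U * Yp) *\<^sub>v v) $ i)"
      using iN U v unfolding time_rev_def vec_cnj_def
      apply (simp add: scalar_prod_def sum_distrib_left ac_simps)
      by (rule sum.swap)
    moreover have "time_rev n (U *\<^sub>v v) $ i = cnj (((Yp * U) *\<^sub>v v) $ i)"
      using iN U v unfolding time_rev_def vec_cnj_def
      apply (simp add: scalar_prod_def sum_distrib_left ac_simps)
      by (rule sum.swap)
    ultimately show "((cmat U * Yp) *\<^sub>v v) $ i = ((Yp * U) *\<^sub>v v) $ i" by simp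
  qed (use U in simp)
  then show ?thesis unfolding tsym_def using U by (intro mat_eq_vecs[of _ N N]) auto
qed

lemma pauli_comm_pm: "\<exists>e\<in>{1, -1}. pauli_mat n p * pauli_mat n q = e \<cdot>\<^sub>m (pauli_mat n q * pauli_mat n p)"
  using pauli_comm[of n p q] sign_prod_pm[of "\<lambda>j. p j = PI \<or> q j = PI \<or> p j = q j" n]
  unfolding ac_def by blast

lemma g_comm_pm: assumes i: "i < m"
  shows "\<exists>e\<in>{1, -1}. g i * pauli_mat n p = e \<cdot>\<^sub>m (pauli_mat n p * g i)"
proof -
  obtain c q where c: "c \<in> {1, -1}" "g i = c \<cdot>\<^sub>m pauli_mat n q" using g_form[OF i] by blast
  obtain e where e: "e \<in> {1, -1}" "pauli_mat n q * pauli_mat n p = e \<cdot>\<^sub>m (pauli_mat n p * pauli_mat n q)"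
    using pauli_comm_pm by blast
  have "g i * pauli_mat n p = c \<cdot>\<^sub>m (pauli_mat n q * pauli_mat n p)" unfolding c(2) by (simp add: sq_simps)
  also have "\<dots> = e \<cdot>\<^sub>m (pauli_mat n p * g i)" unfolding e(2) c(2) by (simp add: sq_simps ac_simps)
  finally show ?thesis using e(1) by blast
qed

lemma comm_S: assumes Pc: "P \<in> carrier_mat N N" and gc: "\<And>i. i < m \<Longrightarrow> g i * P = P * g i"
  shows "M \<in> S \<Longrightarrow> M * P = P * M"
  unfolding S_def'
proof (induction rule: gen_group.induct)
  case gen_one then show ?case using Pc by simp
next
  case (gen_mult h M)
  then obtain i where i: "i < m" "h = g i" by auto
  have Mc: "M \<in> carrier_mat N N" using gen_mult S_carrier S_def' by simp
  have gc': "g i \<in> carrier_mat N N" using g_carrier0[OF i(1)] .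
  have "h * M * P = g i * (M * P)" using i Mc gc' Pc by (simp add: sq_assoc)
  also have "\<dots> = (g i * P) * M" using gen_mult Mc gc' Pc by (simp add: sq_assoc)
  also have "\<dots> = P * (h * M)" using gc[OF i(1)] i Mc gc' Pc by (simp add: sq_assoc)
  finally show ?case .
qed

lemma comm_P0: assumes Pc: "P \<in> carrier_mat N N" and gc: "\<And>i. i < m \<Longrightarrow> g i * P = P * g i"
  shows "P * P0 = P0 * P"
  unfolding sp_fprod
proof (rule fprod_comm)
  fix i assume "i \<in> set [0..<m]"
  then have i: "i < m" by simp
  show "P * Fg (replicate m False) i = Fg (replicate m False) i * P"
    unfolding Fg_def using g_carrier0[OF i] Pc gc[OF i] by (intro aff_comm1) auto
qed (use Pc Fg_carrier in auto)

lemma half_proj: assumes c: "M \<in> carrier_mat N N" and h: "adj M = M" and sq: "M * M = 1\<^sub>m N"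
  shows "proj N ((1/2) \<cdot>\<^sub>m (1\<^sub>m N + M))"
proof -
  have X: "(1\<^sub>m N + M) * (1\<^sub>m N + M) = 2 \<cdot>\<^sub>m (1\<^sub>m N + M)" using c sq by (intro one_mult_sq) auto
  have "((1/2) \<cdot>\<^sub>m (1\<^sub>m N + M)) * ((1/2) \<cdot>\<^sub>m (1\<^sub>m N + M)) = (1/2 * (1/2)) \<cdot>\<^sub>m ((1\<^sub>m N + M) * (1\<^sub>m N + M))"
    using c by (intro smult_mult_smult) auto
  also have "\<dots> = (1/2) \<cdot>\<^sub>m (1\<^sub>m N + M)" unfolding X by simp
  finally show ?thesis unfolding proj_def using c h by (simp add: adj_smult adj_add[of _ N N])
qed


subsection \<open>Existence of a Z-type logical operator\<close>

definition Zu :: "nat \<Rightarrow> complex mat" where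
  "Zu u = pauli_mat n (\<lambda>j. if qbit j u = 1 then PZ else PI)"

definition chi :: "nat \<Rightarrow> nat \<Rightarrow> complex" where
  "chi a u = (\<Prod>j<n. if qbit j u = 1 \<and> qbit j a = 1 then -1 else 1)"

lemma Zu_carrier[simp]: "Zu u \<in> carrier_mat N N" unfolding Zu_def by simp

lemma bit_sum: "a < 2 \<Longrightarrow> b < 2 \<Longrightarrow> c < 2 \<Longrightarrow>
  (if 0 = (1::nat) \<and> a = 1 then -1 else 1) * pauli1_entry (if 0 = (1::nat) then PZ else PI) b c
  + (if 1 = (1::nat) \<and> a = 1 then -1 else 1) * pauli1_entry (if 1 = (1::nat) then PZ else PI) b c
  = (if b = c \<and> a = b then 2 else (0::complex))"
  by (auto dest!: lt2_cases)

lemma fourier: assumes abc: "a < N" "b < N" "c < N"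
  shows "(\<Sum>u<N. chi a u * Zu u $$ (b, c)) = (if a = b \<and> b = c then of_nat N else 0)"
proof -
  define h where "h j (bt::nat) = (if bt = 1 \<and> qbit j a = 1 then -1 else 1) *
      pauli1_entry (if bt = 1 then PZ else PI) (qbit j b) (qbit j c)" for j bt
  have "chi a u * Zu u $$ (b, c) = (\<Prod>j<n. h j (qbit j u))" for u
    unfolding chi_def Zu_def h_def pauli_mat_def using abc by (simp add: prod.distrib)
  then have "(\<Sum>u<N. chi a u * Zu u $$ (b, c)) = (\<Prod>j<n. h j 0 + h j 1)"
    using sum_bits[of h n] by simp
  also have "\<dots> = (\<Prod>j<n. if qbit j b = qbit j c \<and> qbit j a = qbit j b then 2 else 0)"
    unfolding h_def by (intro prod.cong refl) (rule bit_sum; simp)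
  also have "\<dots> = (if \<forall>j<n. qbit j b = qbit j c \<and> qbit j a = qbit j b then 2 ^ n else 0)"
    by (auto simp: prod_zero_iff)
  also have "(\<forall>j<n. qbit j b = qbit j c \<and> qbit j a = qbit j b) \<longleftrightarrow> a = b \<and> b = c"
    using bits_eq[of b n c] bits_eq[of a n b] abc by auto
  finally show ?thesis by simp
qed

lemma smult_self_neg: "(X :: complex mat) \<in> carrier_mat N N \<Longrightarrow> X = (-1) \<cdot>\<^sub>m X \<Longrightarrow> X = 0\<^sub>m N N"
proof (rule eq_matI)
  fix i j assume X: "X \<in> carrier_mat N N" "X = (-1) \<cdot>\<^sub>m X" and ij: "i < dim_row (0\<^sub>m N N :: complex mat)" "j < dim_col (0\<^sub>m N N :: complex mat)"
  then have "X $$ (i, j) = - X $$ (i, j)" by (metis carrier_matD index_smult_mat(1) index_zero_mat(2,3) mult_minus1)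
  then show "X $$ (i, j) = 0\<^sub>m N N $$ (i, j)" using ij by simp
qed auto

lemma P0c: "P0 \<in> carrier_mat N N" using sp_carrier .

lemma P0_sandwich: "\<exists>l. P0 * Zu u * P0 = l \<cdot>\<^sub>m P0" if H: "\<not> (\<exists>p. z_type n p \<and> nontrivial_logical n S p)"
proof (cases "\<forall>i<m. g i * Zu u = Zu u * g i")
  case True
  then have cS: "\<forall>M\<in>S. M * Zu u = Zu u * M" using comm_S[of "Zu u"] by simp
  have zt: "z_type n (\<lambda>j. if qbit j u = 1 then PZ else PI)" unfolding z_type_def by auto
  obtain c where c: "c \<in> phases" "c \<cdot>\<^sub>m Zu u \<in> S"
    using H zt cS unfolding nontrivial_logical_def Zu_def by blast
  have "(c \<cdot>\<^sub>m Zu u) * P0 = P0" using S_P0[OF c(2)] .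
  then have "c \<cdot>\<^sub>m (Zu u * P0) = P0" using P0c by (simp add: sq_simps)
  then have "(1 / c) \<cdot>\<^sub>m (c \<cdot>\<^sub>m (Zu u * P0)) = (1 / c) \<cdot>\<^sub>m P0" by simp
  then have ZP: "Zu u * P0 = (1 / c) \<cdot>\<^sub>m P0" using phases_nz[OF c(1)] by simp
  have "P0 * Zu u * P0 = P0 * ((1 / c) \<cdot>\<^sub>m P0)" using P0c by (simp add: sq_assoc ZP)
  also have "\<dots> = (1 / c) \<cdot>\<^sub>m P0" using P0c sp_proj unfolding proj_def by (simp add: sq_simps)
  finally show ?thesis by blast
next
  case False
  then obtain i where i: "i < m" "g i * Zu u \<noteq> Zu u * g i" by blast
  obtain e where e: "e \<in> {1, -1}" "g i * Zu u = e \<cdot>\<^sub>m (Zu u * g i)"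
    using g_comm_pm[OF i(1)] unfolding Zu_def by blast
  have gc: "g i \<in> carrier_mat N N" using g_carrier0[OF i(1)] .
  have em: "e = -1" using e i(2) by auto
  have Zg: "Zu u * g i = (-1) \<cdot>\<^sub>m (g i * Zu u)"
    using e(2) em gc by (simp)
  define X where "X = P0 * Zu u * P0"
  have Xc: "X \<in> carrier_mat N N" unfolding X_def using P0c by simp
  have "X = P0 * Zu u * (g i * P0)" unfolding X_def g_P0[OF i(1)] ..
  also have "\<dots> = P0 * (Zu u * g i) * P0" using P0c gc by (simp add: sq_assoc)
  also have "\<dots> = (-1) \<cdot>\<^sub>m ((P0 * g i) * Zu u * P0)" unfolding Zg using P0c gc by (simp add: sq_simps sq_assoc)
  also have "\<dots> = (-1) \<cdot>\<^sub>m X" unfolding P0_g[OF i(1)] X_def ..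
  finally have "X = 0\<^sub>m N N" using Xc by (intro smult_self_neg) auto
  then have "P0 * Zu u * P0 = 0 \<cdot>\<^sub>m P0" unfolding X_def using P0c by (intro eq_matI) auto
  then show ?thesis by blast
qed


lemma triple_entry: assumes "A \<in> carrier_mat N N" "B \<in> carrier_mat N N" "C \<in> carrier_mat N N"
  "x < N" "y < N"
  shows "(A * B * C) $$ (x, y) = (\<Sum>c<N. \<Sum>b<N. A $$ (x, b) * B $$ (b, c) * C $$ (c, y))"
proof -
  have "(A * B * C) $$ (x, y) = row (A * B) x \<bullet> col C y" by (rule index_mult_mat) (use assms in auto)
  also have "\<dots> = (\<Sum>c<N. (A * B) $$ (x, c) * C $$ (c, y))"
    unfolding scalar_prod_def using assms by (auto simp: lessThan_atLeast0 intro!: sum.cong)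
  also have "\<dots> = (\<Sum>c<N. (\<Sum>b<N. A $$ (x, b) * B $$ (b, c)) * C $$ (c, y))"
    using assms by (intro sum.cong refl) (simp add: scalar_prod_def lessThan_atLeast0)
  finally show ?thesis by (simp add: sum_distrib_right)
qed

lemma P0_entry_nz: "\<exists>a<N. P0 $$ (a, a) \<noteq> 0"
proof (rule ccontr)
  assume "\<not> (\<exists>a<N. P0 $$ (a, a) \<noteq> 0)"
  then have "tr P0 = 0" unfolding tr_def using P0c by (auto intro!: sum.neutral)
  then show False using tr_P0 by simp
qed

lemma exists_z_logical: "\<exists>p. z_type n p \<and> nontrivial_logical n S p"
proof (rule ccontr)
  assume H: "\<not> (\<exists>p. z_type n p \<and> nontrivial_logical n S p)"
  have "\<forall>u. \<exists>l. P0 * Zu u * P0 = l \<cdot>\<^sub>m P0" using P0_sandwich[OF H] by blast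
  then obtain lam where lam: "\<And>u. P0 * Zu u * P0 = lam u \<cdot>\<^sub>m P0" by metis
  obtain a where a: "a < N" "P0 $$ (a, a) \<noteq> 0" using P0_entry_nz by blast
  define mu where "mu = (\<Sum>u<N. chi a u * lam u)"
  define P where "P i j = P0 $$ (i, j)" for i j
  have key: "of_nat N * (P x a * P a y) = mu * P x y" if xy: "x < N" "y < N" for x y
  proof -
    have "(\<Sum>u<N. chi a u * (P0 * Zu u * P0) $$ (x, y))
        = (\<Sum>u<N. \<Sum>c<N. \<Sum>b<N. chi a u * (P x b * Zu u $$ (b, c) * P c y))"
      unfolding P_def triple_entry[OF P0c Zu_carrier P0c xy]
      by (simp add: sum_distrib_left ac_simps)
    also have "\<dots> = (\<Sum>c<N. \<Sum>b<N. \<Sum>u<N. chi a u * (P x b * Zu u $$ (b, c) * P c y))"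
      by (subst sum.swap) (subst (2) sum.swap, rule refl)
    also have "\<dots> = (\<Sum>c<N. \<Sum>b<N. P x b * P c y * (\<Sum>u<N. chi a u * Zu u $$ (b, c)))"
      by (simp add: sum_distrib_left ac_simps)
    also have "\<dots> = (\<Sum>c<N. \<Sum>b<N. P x b * P c y * (if a = b \<and> b = c then of_nat N else 0))"
      using a by (intro sum.cong refl) (simp add: fourier)
    also have "\<dots> = (\<Sum>c<N. if c = a then P x a * P a y * of_nat N else 0)"
    proof (intro sum.cong refl)
      fix c assume c: "c \<in> {..<N}"
      have "(\<Sum>b<N. P x b * P c y * (if a = b \<and> b = c then of_nat N else 0))
          = (\<Sum>b<N. if b = a then (if c = a then P x a * P a y * of_nat N else 0) else 0)"
        by (intro sum.cong refl) auto
      also have "\<dots> = (if c = a then P x a * P a y * of_nat N else 0)" using a by simp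
      finally show "(\<Sum>b<N. P x b * P c y * (if a = b \<and> b = c then of_nat N else 0))
          = (if c = a then P x a * P a y * of_nat N else 0)" .
    qed
    also have "\<dots> = P x a * P a y * of_nat N" using a by simp
    finally have L: "(\<Sum>u<N. chi a u * (P0 * Zu u * P0) $$ (x, y)) = P x a * P a y * of_nat N" .
    have "(\<Sum>u<N. chi a u * (P0 * Zu u * P0) $$ (x, y)) = (\<Sum>u<N. chi a u * lam u * P x y)"
      unfolding lam P_def using xy P0c by (simp add: ac_simps)
    also have "\<dots> = mu * P x y" unfolding mu_def by (simp add: sum_distrib_right)
    finally show ?thesis using L by (simp add: ac_simps)
  qed
  have Pa: "P a a \<noteq> 0" using a unfolding P_def by simp
  have "of_nat N * (P a a * P a a) = mu * P a a" using key[OF a(1) a(1)] .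
  then have mu: "mu = of_nat N * P a a" using Pa by (simp add: field_simps)
  have "(\<Sum>x<N. of_nat N * (P x a * P a x)) = (\<Sum>x<N. mu * P x x)" using key a by simp
  moreover have "(\<Sum>x<N. mu * P x x) = mu * tr P0" unfolding tr_def P_def using P0c by (simp add: sum_distrib_left)
  moreover have "(\<Sum>x<N. of_nat N * (P x a * P a x)) = of_nat N * (P0 * P0) $$ (a, a)"
    unfolding P_def using a P0c by (simp add: scalar_prod_def lessThan_atLeast0 sum_distrib_left ac_simps)
  moreover have "P0 * P0 = P0" using sp_proj unfolding proj_def by simp
  ultimately have "of_nat N * P a a = mu * 2" unfolding tr_P0 P_def by simp
  then have "P a a = 0" unfolding mu by simp
  then show False using Pa by simp
qed


end

lemma card_split: "card {j. j < n \<and> P j} + card {j. j < n \<and> \<not> P j} = (n::nat)"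
proof -
  have "{j. j < n \<and> P j} \<union> {j. j < n \<and> \<not> P j} = {..<n}" by auto
  moreover have "{j. j < n \<and> P j} \<inter> {j. j < n \<and> \<not> P j} = {}" by auto
  ultimately show ?thesis by (metis (no_types, lifting) card_Un_disjoint card_lessThan finite_Un finite_lessThan)
qed

locale qcode2 = qcode +
  assumes css: "is_css n (stab_group n m g)"
    and dx_odd: "odd (dist_x n (stab_group n m g))"
    and dz_odd: "odd (dist_z n (stab_group n m g))"
begin

abbreviation "Xall \<equiv> pauli_mat n (\<lambda>_. PX)"
abbreviation "Zall \<equiv> pauli_mat n (\<lambda>_. PZ)"

lemma prod_ac_X: "z_type n p \<Longrightarrow> (\<Prod>j<n. ac (p j) PX) = (-1) ^ pauli_weight n p"
  "x_type n p \<Longrightarrow> (\<Prod>j<n. ac (p j) PX) = 1"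
proof -
  assume z: "z_type n p"
  have "(\<Prod>j<n. ac (p j) PX) = (\<Prod>j<n. if p j = PI then 1 else -1)"
    using z unfolding z_type_def ac_def by (intro prod.cong) auto
  then show "(\<Prod>j<n. ac (p j) PX) = (-1) ^ pauli_weight n p" unfolding sign_prod pauli_weight_def by simp
next
  assume x: "x_type n p"
  show "(\<Prod>j<n. ac (p j) PX) = 1"
    using x unfolding x_type_def ac_def by (intro prod.neutral) auto
qed

lemma prod_ac_Z: "x_type n p \<Longrightarrow> (\<Prod>j<n. ac (p j) PZ) = (-1) ^ pauli_weight n p"
  "z_type n p \<Longrightarrow> (\<Prod>j<n. ac (p j) PZ) = 1"
proof -
  assume z: "x_type n p"
  have "(\<Prod>j<n. ac (p j) PZ) = (\<Prod>j<n. if p j = PI then 1 else -1)"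
    using z unfolding x_type_def ac_def by (intro prod.cong) auto
  then show "(\<Prod>j<n. ac (p j) PZ) = (-1) ^ pauli_weight n p" unfolding sign_prod pauli_weight_def by simp
next
  assume x: "z_type n p"
  show "(\<Prod>j<n. ac (p j) PZ) = 1"
    using x unfolding z_type_def ac_def by (intro prod.neutral) auto
qed

lemma css_comm_all: "M \<in> S \<Longrightarrow> M * Xall = Xall * M \<and> M * Zall = Zall * M"
proof -
  obtain H where H: "\<forall>h\<in>H. \<exists>c p. c \<in> phases \<and> h = c \<cdot>\<^sub>m pauli_mat n p \<and> (x_type n p \<or> z_type n p)"
    and HS: "gen_group n H = S"
    using css unfolding is_css_def by blast
  have hc: "h * Xall = Xall * h \<and> h * Zall = Zall * h" if h: "h \<in> H" for h
  proof -
    obtain c p where c: "c \<in> phases" "h = c \<cdot>\<^sub>m pauli_mat n p" "x_type n p \<or> z_type n p" using H h by blast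
    have "h * 1\<^sub>m N \<in> gen_group n H" using h by (intro gen_mult gen_one)
    then have "h \<in> S" using HS c(2) by simp
    then have ev: "even (pauli_weight n p)" using even_weight c by blast
    have "(\<Prod>j<n. ac (p j) PX) = 1" "(\<Prod>j<n. ac (p j) PZ) = 1"
      using c(3) ev prod_ac_X prod_ac_Z by auto
    then show ?thesis unfolding c(2) using pauli_comm[of n p "\<lambda>_. PX"] pauli_comm[of n p "\<lambda>_. PZ"]
      by (simp add: sq_simps)
  qed
  assume "M \<in> S"
  then have "M \<in> gen_group n H" using HS by simp
  then show ?thesis
  proof (induction rule: gen_group.induct)
    case gen_one then show ?case by simp
  next
    case (gen_mult h M)
    have Mc: "M \<in> carrier_mat N N" using gen_mult HS S_carrier by simp
    have "h * 1\<^sub>m N \<in> gen_group n H" using gen_mult by (intro gen_mult.hyps(1)[THEN gen_group.gen_mult] gen_one)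
    then have hc': "h \<in> carrier_mat N N" using HS S_carrier
      by (metis H gen_mult.hyps(1) pauli_carrier smult_carrier_mat)
    have chain: "h * M * Z = Z * (h * M)" if Zc: "Z \<in> carrier_mat N N" and hZ: "h * Z = Z * h" and MZ: "M * Z = Z * M" for Z
    proof -
      have "h * M * Z = h * (M * Z)" using Mc hc' Zc by (simp add: sq_assoc)
      also have "\<dots> = h * (Z * M)" unfolding MZ ..
      also have "\<dots> = (h * Z) * M" using Mc hc' Zc by (simp add: sq_assoc)
      also have "\<dots> = (Z * h) * M" unfolding hZ ..
      also have "\<dots> = Z * (h * M)" using Mc hc' Zc by (simp add: sq_assoc)
      finally show ?thesis .
    qed
    show ?case using chain hc[OF gen_mult.hyps(1)] gen_mult.IH by simp
  qed
qed

lemma one_ne_zero_mat: "1\<^sub>m N \<noteq> (0\<^sub>m N N :: complex mat)"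
proof
  assume "1\<^sub>m N = (0\<^sub>m N N :: complex mat)"
  then have "1\<^sub>m N $$ (0, 0) = (0\<^sub>m N N :: complex mat) $$ (0, 0)" by simp
  then show False by simp
qed

lemma nontriv_from_anti:
  assumes q: "nontrivial_logical n S q"
    and anti: "pauli_mat n q * pauli_mat n r = (-1) \<cdot>\<^sub>m (pauli_mat n r * pauli_mat n q)"
  shows "\<forall>c\<in>phases. c \<cdot>\<^sub>m pauli_mat n r \<notin> S"
proof (intro ballI notI)
  fix c assume c: "c \<in> phases" "c \<cdot>\<^sub>m pauli_mat n r \<in> S"
  define Q where "Q = pauli_mat n q"
  define R where "R = pauli_mat n r"
  have Qc: "Q \<in> carrier_mat N N" and Rc: "R \<in> carrier_mat N N" unfolding Q_def R_def by simp_all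
  have "(c \<cdot>\<^sub>m R) * Q = Q * (c \<cdot>\<^sub>m R)" using q c unfolding nontrivial_logical_def Q_def R_def by blast
  then have "c \<cdot>\<^sub>m (R * Q) = c \<cdot>\<^sub>m (Q * R)" using Qc Rc by (simp add: sq_simps)
  then have "(1 / c) \<cdot>\<^sub>m (c \<cdot>\<^sub>m (R * Q)) = (1 / c) \<cdot>\<^sub>m (c \<cdot>\<^sub>m (Q * R))" by simp
  then have RQ: "R * Q = Q * R" using phases_nz[OF c(1)] by simp
  have "R * Q = (-1) \<cdot>\<^sub>m (R * Q)" using anti RQ unfolding Q_def R_def by simp
  then have z: "R * Q = 0\<^sub>m N N" using Qc Rc by (intro smult_self_neg) auto
  have "(R * Q) * (Q * R) = 1\<^sub>m N"
  proof -
    have "(R * Q) * (Q * R) = R * ((Q * Q) * R)" using Qc Rc by (simp add: sq_assoc)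
    also have "Q * Q = 1\<^sub>m N" unfolding Q_def by (rule pauli_sq)
    finally show ?thesis using Rc unfolding R_def by (simp add: pauli_sq)
  qed
  then show False using z one_ne_zero_mat Qc Rc by simp
qed

lemma odd_anti_X: "z_type n p \<Longrightarrow> odd (pauli_weight n p) \<Longrightarrow>
    pauli_mat n p * Xall = (-1) \<cdot>\<^sub>m (Xall * pauli_mat n p)"
  using pauli_comm[of n p "\<lambda>_. PX"] prod_ac_X(1) by simp

lemma odd_anti_Z: "x_type n p \<Longrightarrow> odd (pauli_weight n p) \<Longrightarrow>
    pauli_mat n p * Zall = (-1) \<cdot>\<^sub>m (Zall * pauli_mat n p)"
  using pauli_comm[of n p "\<lambda>_. PZ"] prod_ac_Z(1) by simp

lemma comm_half: assumes "(A :: complex mat) \<in> carrier_mat N N" "B \<in> carrier_mat N N" "A * B = B * A"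
  shows "A * ((1/2) \<cdot>\<^sub>m (1\<^sub>m N + B)) = ((1/2) \<cdot>\<^sub>m (1\<^sub>m N + B)) * A"
  using aff_comm1[OF assms, of "1/2" 1] by simp

lemma comm_half2: assumes "(A :: complex mat) \<in> carrier_mat N N" "B \<in> carrier_mat N N" "A * B = B * A"
  shows "((1/2) \<cdot>\<^sub>m (1\<^sub>m N + A)) * ((1/2) \<cdot>\<^sub>m (1\<^sub>m N + B)) = ((1/2) \<cdot>\<^sub>m (1\<^sub>m N + B)) * ((1/2) \<cdot>\<^sub>m (1\<^sub>m N + A))"
  using aff_comm[OF assms, of "1/2" 1 "1/2" 1] by simp

lemma n_odd: "odd n"
proof -
  obtain pz where pz: "z_type n pz" "nontrivial_logical n S pz" using exists_z_logical by blast
  have "\<exists>p. z_type n p \<and> nontrivial_logical n S p \<and> pauli_weight n p = dist_z n S"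
    unfolding dist_z_def by (rule LeastI_ex) (use pz in blast)
  then obtain zl where zl: "z_type n zl" "nontrivial_logical n S zl" "pauli_weight n zl = dist_z n S"
    by blast
  have zlo: "odd (pauli_weight n zl)" using zl(3) dz_odd by simp
  have Xnt: "nontrivial_logical n S (\<lambda>_. PX)"
    unfolding nontrivial_logical_def
    using css_comm_all nontriv_from_anti[OF zl(2) odd_anti_X[OF zl(1) zlo]] by blast
  have xt: "x_type n (\<lambda>_. PX)" unfolding x_type_def by simp
  have "\<exists>p. x_type n p \<and> nontrivial_logical n S p \<and> pauli_weight n p = dist_x n S"
    unfolding dist_x_def by (rule LeastI_ex) (use Xnt xt in blast)
  then obtain xl where xl: "x_type n xl" "nontrivial_logical n S xl" "pauli_weight n xl = dist_x n S"
    by blast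
  have xlo: "odd (pauli_weight n xl)" using xl(3) dx_odd by simp
  have Znt: "nontrivial_logical n S (\<lambda>_. PZ)"
    unfolding nontrivial_logical_def
    using css_comm_all nontriv_from_anti[OF xl(2) odd_anti_Z[OF xl(1) xlo]] by blast
  define r where "r j = pmul PZ (zl j)" for j
  have ZZ: "Zall * pauli_mat n zl = pauli_mat n r"
  proof -
    have "(\<Prod>j<n. pph PZ (zl j)) = 1"
      using zl(1) unfolding z_type_def by (intro prod.neutral) auto
    moreover have "pauli_mat n (\<lambda>j. pmul PZ (zl j)) = pauli_mat n r" unfolding r_def ..
    ultimately show ?thesis unfolding pauli_mult by simp
  qed
  have wr: "pauli_weight n r + pauli_weight n zl = n"
  proof -
    have "{j. j < n \<and> r j \<noteq> PI} = {j. j < n \<and> zl j = PI}"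
      using zl(1) unfolding z_type_def r_def by auto
    then show ?thesis unfolding pauli_weight_def using card_split[of n "\<lambda>j. zl j = PI"] by simp
  qed
  show ?thesis
  proof (cases "\<exists>c\<in>phases. c \<cdot>\<^sub>m pauli_mat n r \<in> S")
    case True
    then obtain c where c: "c \<in> phases" "c \<cdot>\<^sub>m pauli_mat n r \<in> S" by blast
    have "even (pauli_weight n r)" using even_weight c by blast
    then have "odd (pauli_weight n r + pauli_weight n zl)" using zlo by simp
    then show ?thesis using wr by simp
  next
    case False
    define Za where "Za = Zall"
    define Zl where "Zl = pauli_mat n zl"
    have Zac: "Za \<in> carrier_mat N N" and Zlc: "Zl \<in> carrier_mat N N" unfolding Za_def Zl_def by simp_all
    have t1: "tr (Za * P0) = 0" unfolding Za_def using Znt unfolding nontrivial_logical_def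
      by (intro tr_P0_nontriv) blast
    have t2: "tr (Zl * P0) = 0" unfolding Zl_def using zl(2) unfolding nontrivial_logical_def
      by (intro tr_P0_nontriv) blast
    have t3: "tr ((Za * Zl) * P0) = 0" unfolding Za_def Zl_def ZZ using False by (intro tr_P0_nontriv) blast
    have gcomm: "\<And>i. i < m \<Longrightarrow> g i * Z = Z * g i" if "nontrivial_logical n S q" "Z = pauli_mat n q" for q Z
      using that g_in_S unfolding nontrivial_logical_def by blast
    have PZa: "Za * P0 = P0 * Za" using comm_P0[OF Zac] gcomm[OF Znt] Za_def by blast
    have PZl: "Zl * P0 = P0 * Zl" using comm_P0[OF Zlc] gcomm[OF zl(2)] Zl_def by blast
    have ZaZl: "Za * Zl = Zl * Za"
    proof -
      have "(\<Prod>j<n. ac PZ (zl j)) = 1" using zl(1) unfolding z_type_def ac_def by (intro prod.neutral) auto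
      then show ?thesis unfolding Za_def Zl_def using pauli_comm[of n "\<lambda>_. PZ" zl] by simp
    qed
    define H1 where "H1 = (1/2) \<cdot>\<^sub>m (1\<^sub>m N + Za)"
    define H2 where "H2 = (1/2) \<cdot>\<^sub>m (1\<^sub>m N + Zl)"
    define F where "F i = (if i = 0 then P0 else if i = 1 then H1 else H2)" for i :: nat
    have H1p: "proj N H1" unfolding H1_def Za_def by (intro half_proj) (auto simp: pauli_adj pauli_sq)
    have H2p: "proj N H2" unfolding H2_def Zl_def by (intro half_proj) (auto simp: pauli_adj pauli_sq)
    have c01: "P0 * H1 = H1 * P0" unfolding H1_def using P0c Zac PZa by (intro comm_half) auto
    have c02: "P0 * H2 = H2 * P0" unfolding H2_def using P0c Zlc PZl by (intro comm_half) auto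
    have c12: "H1 * H2 = H2 * H1" unfolding H1_def H2_def using Zac Zlc ZaZl by (intro comm_half2) auto
    have Qp: "proj N (fprod N F [0, 1, 2])"
    proof (rule fprod_proj)
      fix i assume "i \<in> set [0, 1, (2::nat)]"
      then show "proj N (F i)" unfolding F_def using sp_proj H1p H2p by auto
    next
      fix i j assume "i \<in> set [0, 1, (2::nat)]" "j \<in> set [0, 1, (2::nat)]"
      then show "F i * F j = F j * F i" unfolding F_def using c01 c02 c12 by auto
    qed
    have H1c: "H1 \<in> carrier_mat N N" and H2c: "H2 \<in> carrier_mat N N" unfolding H1_def H2_def using Zac Zlc by simp_all
    have Q: "fprod N F [0, 1, 2] = P0 * (H1 * H2)" unfolding F_def using H2c by simp
    have "H1 * H2 = (1/4) \<cdot>\<^sub>m (1\<^sub>m N + Za + Zl + Za * Zl)"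
      unfolding H1_def H2_def using Zac Zlc by (simp add: smult_mult_smult[of _ N] one_plus_mult)
    then have "tr (fprod N F [0, 1, 2]) = (1/4) * (tr P0 + tr (P0 * Za) + tr (P0 * Zl) + tr (P0 * (Za * Zl)))"
      unfolding Q using P0c Zac Zlc by (simp add: sq_simps)
    also have "tr (P0 * Za) = 0" using t1 tr_comm[OF P0c Zac] by simp
    also have "tr (P0 * Zl) = 0" using t2 tr_comm[OF P0c Zlc] by simp
    also have "tr (P0 * (Za * Zl)) = 0" using t3 tr_comm[of P0 N N "Za * Zl"] P0c Zac Zlc by simp
    finally have trQ: "tr (fprod N F [0, 1, 2]) = 1/2" unfolding tr_P0 by simp
    then have "tr (fprod N F [0, 1, 2]) \<noteq> 0" by (metis divide_eq_0_iff one_neq_zero zero_neq_numeral)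
    then obtain rr where "rr \<ge> 1" "tr (fprod N F [0, 1, 2]) = complex_of_real rr"
      using proj_tr_ge1[OF Qp] by blast
    then have "complex_of_real rr = complex_of_real (1/2)" using trQ by simp
    then have "rr = 1/2" by (simp only: of_real_eq_iff)
    then have False using \<open>rr \<ge> 1\<close> by simp
    then show ?thesis ..
  qed
qed


lemma P0_props: "P0 \<in> carrier_mat N N" "adj P0 = P0" "P0 * P0 = P0"
  using sp_proj unfolding proj_def by auto

lemma sp_props: "syndrome_proj n m g s \<in> carrier_mat N N" "adj (syndrome_proj n m g s) = syndrome_proj n m g s"
  "syndrome_proj n m g s * syndrome_proj n m g s = syndrome_proj n m g s"
  using sp_proj unfolding proj_def by auto

lemma idem_l: assumes "(A :: complex mat) \<in> carrier_mat N N" "X \<in> carrier_mat N N" "A * A = A"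
  shows "A * (A * X) = A * X"
proof -
  have "(A * A) * X = A * (A * X)" by (rule sq_assoc[OF assms(1) assms(1) assms(2)])
  then show ?thesis using assms(3) by simp
qed

lemma main:
  fixes C :: "bool list \<Rightarrow> complex mat" and U :: "complex mat"
  assumes recovery: "\<forall>s \<in> syndromes m. C s \<in> pauli_ops n \<and> syndrome_proj n m g s * C s = C s * P0"
    and U_unitary: "unitary_mat N U"
    and T_commute: "\<forall>v \<in> carrier_vec N. U *\<^sub>v time_rev n v = time_rev n (U *\<^sub>v v)"
  shows "\<exists>p :: bool list \<Rightarrow> real. \<exists>UL :: bool list \<Rightarrow> complex mat.
     (\<forall>s \<in> syndromes m. p s \<ge> 0) \<and>
     (\<Sum>s \<in> syndromes m. p s) = 1 \<and>
     (\<forall>s \<in> syndromes m.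
        unitary_on_code N P0 (UL s) \<and>
        C s * syndrome_proj n m g s * U * P0 =
          complex_of_real (sqrt (p s)) \<cdot>\<^sub>m (UL s * P0))"
proof -
  have Uc: "U \<in> carrier_mat N N" and UaU: "adj U * U = 1\<^sub>m N" and UUa: "U * adj U = 1\<^sub>m N"
    using U_unitary unfolding unitary_mat_def by auto
  have Uac: "adj U \<in> carrier_mat N N" using Uc by simp
  have tU: "tsym U" using tsym_from_vec[OF Uc T_commute] .
  have tUa: "tsym (adj U)" using tsym_adj[OF Uc tU UaU UUa] .
  have Ysq: "Yp * Yp = - 1\<^sub>m N" using Yp_sq n_odd uminus_one_mat by simp
  note P0p = P0_props
  define Pi where "Pi s = syndrome_proj n m g s" for s
  have Pic: "Pi s \<in> carrier_mat N N" and Pih: "adj (Pi s) = Pi s" and PiPi: "Pi s * Pi s = Pi s" for s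
    unfolding Pi_def using sp_props by auto
  have tPi: "tsym (Pi s)" for s unfolding Pi_def by (rule tsym_sp)
  have tP0: "tsym P0" by (rule tsym_sp)
  define B where "B s = P0 * (adj U * (Pi s * (U * P0)))" for s
  have Bc: "B s \<in> carrier_mat N N" for s unfolding B_def using P0p Pic Uc by simp
  have Bh: "adj (B s) = B s" for s
    unfolding B_def using P0p Pic Pih Uc by (simp add: sq_adj_mult sq_assoc)
  have BP: "B s * P0 = B s" for s
    unfolding B_def using P0p Pic Uc by (simp add: sq_assoc)
  have PB: "P0 * B s = B s" for s
    unfolding B_def using P0p Pic Uc by (simp add: idem_l)
  have tB: "tsym (B s)" for s
    unfolding B_def using P0p Pic Uc Uac tU tUa tPi tP0 by (simp add: tsym_mult)
  have "\<forall>s. \<exists>l::real. B s = complex_of_real l \<cdot>\<^sub>m P0"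
  proof
    fix s
    show "\<exists>l::real. B s = complex_of_real l \<cdot>\<^sub>m P0"
      by (rule kramers[OF sp_proj tr_P0 Yp_carrier cmat_Yp Ysq Yp_unitary _ Bc Bh BP PB])
        (use tP0 tB in \<open>auto simp: tsym_def\<close>)
  qed
  then obtain lam where lam: "\<And>s. B s = complex_of_real (lam s) \<cdot>\<^sub>m P0" by metis
  define V where "V s = C s * (Pi s * (U * P0))" for s
  have Cform: "\<exists>c r. c \<in> phases \<and> C s = c \<cdot>\<^sub>m pauli_mat n r" if s: "s \<in> syndromes m" for s
    using recovery s unfolding pauli_ops_def by blast
  have Cc: "C s \<in> carrier_mat N N" if s: "s \<in> syndromes m" for s using Cform[OF s] by auto
  have CC: "adj (C s) * C s = 1\<^sub>m N" if s: "s \<in> syndromes m" for s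
  proof -
    obtain c r where c: "c \<in> phases" "C s = c \<cdot>\<^sub>m pauli_mat n r" using Cform[OF s] by blast
    have "adj (C s) * C s = (cnj c * c) \<cdot>\<^sub>m (pauli_mat n r * pauli_mat n r)"
      unfolding c(2) adj_smult pauli_adj by (rule smult_mult_smult) auto
    then show ?thesis using phases_cnj[OF c(1)] by (simp add: pauli_sq)
  qed
  have P0C: "P0 * C s = C s * Pi s" if s: "s \<in> syndromes m" for s
  proof -
    obtain c r where c: "c \<in> phases" "C s = c \<cdot>\<^sub>m pauli_mat n r" using Cform[OF s] by blast
    define R where "R = pauli_mat n r"
    have Rc: "R \<in> carrier_mat N N" unfolding R_def by simp
    have Ra: "adj R = R" unfolding R_def by (rule pauli_adj)
    have rec: "Pi s * C s = C s * P0" using recovery s unfolding Pi_def by blast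
    have "adj (Pi s * C s) = adj (C s * P0)" using rec by simp
    then have "adj (C s) * Pi s = P0 * adj (C s)" using Pic Cc[OF s] P0p Pih by (simp add: sq_adj_mult)
    then have "cnj c \<cdot>\<^sub>m (R * Pi s) = cnj c \<cdot>\<^sub>m (P0 * R)"
      unfolding c(2) adj_smult pauli_adj R_def[symmetric] using Rc Ra Pic P0p by (simp add: sq_simps)
    then have "(1 / cnj c) \<cdot>\<^sub>m (cnj c \<cdot>\<^sub>m (R * Pi s)) = (1 / cnj c) \<cdot>\<^sub>m (cnj c \<cdot>\<^sub>m (P0 * R))" by simp
    then have RP: "R * Pi s = P0 * R" using phases_nz[OF c(1)] by simp
    show ?thesis unfolding c(2) R_def[symmetric] using Rc Pic P0p RP by (simp add: sq_simps)
  qed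
  have VV: "adj (V s) * V s = complex_of_real (lam s) \<cdot>\<^sub>m P0" if s: "s \<in> syndromes m" for s
  proof -
    have "adj (V s) * V s = P0 * (adj U * (Pi s * ((adj (C s) * C s) * (Pi s * (U * P0)))))"
      unfolding V_def using Cc[OF s] Pic Pih P0p Uc by (simp add: sq_adj_mult sq_assoc)
    also have "\<dots> = B s" unfolding CC[OF s] B_def using Pic[of s] PiPi[of s] P0p Uc by (simp add: idem_l)
    finally show ?thesis using lam by simp
  qed
  have Vc: "V s \<in> carrier_mat N N" if s: "s \<in> syndromes m" for s
    unfolding V_def using Cc[OF s] Pic P0p Uc by simp
  have VP: "V s * P0 = V s" if s: "s \<in> syndromes m" for s
    unfolding V_def using Cc[OF s] Pic P0p Uc by (simp add: sq_assoc)
  have PV: "P0 * V s = V s" if s: "s \<in> syndromes m" for s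
  proof -
    have "P0 * V s = (P0 * C s) * (Pi s * (U * P0))" unfolding V_def using Cc[OF s] Pic P0p Uc by (simp add: sq_assoc)
    also have "\<dots> = C s * (Pi s * (Pi s * (U * P0)))" unfolding P0C[OF s] using Cc[OF s] Pic P0p Uc by (simp add: sq_assoc)
    also have "\<dots> = V s" unfolding V_def using Pic[of s] PiPi[of s] P0p Uc by (simp add: idem_l)
    finally show ?thesis .
  qed
  have trV: "tr (adj (V s) * V s) = 2 * complex_of_real (lam s)" if s: "s \<in> syndromes m" for s
    unfolding VV[OF s] using P0p tr_P0 by (simp add: sq_tr_smult)
  have lam_nn: "lam s \<ge> 0" if s: "s \<in> syndromes m" for s
  proof -
    obtain r where r: "r \<ge> 0" "tr (adj (V s) * V s) = complex_of_real r"
      using tr_adj_self_nonneg[OF Vc[OF s]] by blast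
    then have "complex_of_real r = complex_of_real (2 * lam s)" using trV[OF s] by simp
    then have "r = 2 * lam s" by (simp only: of_real_eq_iff)
    then show ?thesis using r by simp
  qed
  have trB: "tr (B s) = tr (Pi s * (U * (P0 * adj U)))" for s
  proof -
    have "tr (B s) = tr ((P0 * adj U) * (Pi s * (U * P0)))" unfolding B_def using P0p Uc Pic[of s] by (simp add: sq_assoc)
    also have "\<dots> = tr ((Pi s * (U * P0)) * (P0 * adj U))" using P0p Uc Pic by (intro tr_comm) auto
    also have "\<dots> = tr (Pi s * (U * (P0 * adj U)))" using P0p Uc Pic[of s] by (simp add: sq_assoc idem_l)
    finally show ?thesis .
  qed
  have sum_lam: "(\<Sum>s\<in>syndromes m. lam s) = 1"
  proof -
    have "(\<Sum>s\<in>syndromes m. tr (B s)) = tr (U * (P0 * adj U))"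
      unfolding trB Pi_def using syn_sum[of "U * (P0 * adj U)" m] P0p Uc by simp
    also have "\<dots> = tr ((P0 * adj U) * U)" using P0p Uc by (intro tr_comm) auto
    also have "\<dots> = 2" using P0p Uc UaU tr_P0 by (simp add: sq_assoc)
    finally have "(\<Sum>s\<in>syndromes m. tr (B s)) = 2" .
    moreover have "tr (B s) = 2 * complex_of_real (lam s)" for s unfolding lam using P0p tr_P0 by (simp add: sq_tr_smult)
    ultimately have "(\<Sum>s\<in>syndromes m. 2 * complex_of_real (lam s)) = 2" by simp
    then have "complex_of_real (\<Sum>s\<in>syndromes m. lam s) = complex_of_real 1"
      by (simp add: sum_distrib_left[symmetric])
    then show ?thesis by (simp only: of_real_eq_iff)
  qed
  define UL where "UL s = (if lam s > 0 then complex_of_real (1 / sqrt (lam s)) \<cdot>\<^sub>m V s else 1\<^sub>m N)" for s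
  have goal: "unitary_on_code N P0 (UL s) \<and>
        C s * syndrome_proj n m g s * U * P0 = complex_of_real (sqrt (lam s)) \<cdot>\<^sub>m (UL s * P0)"
    if s: "s \<in> syndromes m" for s
  proof -
    have lhs: "C s * syndrome_proj n m g s * U * P0 = V s"
      unfolding V_def Pi_def using Cc[OF s] sp_props P0p Uc by (simp add: sq_assoc)
    show ?thesis
    proof (cases "lam s > 0")
      case True
      define k where "k = complex_of_real (1 / sqrt (lam s))"
      have kk: "cnj k * k * complex_of_real (lam s) = 1"
        unfolding k_def using True by (simp flip: of_real_mult)
      have ULs: "UL s = k \<cdot>\<^sub>m V s" unfolding UL_def k_def using True by simp
      have ULP: "UL s * P0 = k \<cdot>\<^sub>m V s" unfolding ULs using Vc[OF s] P0p VP[OF s] by (simp add: sq_simps)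
      have "unitary_on_code N P0 (UL s)"
        unfolding unitary_on_code_def
      proof (intro conjI)
        show "UL s \<in> carrier_mat N N" unfolding ULs using Vc[OF s] by simp
        show "P0 * (UL s * P0) = UL s * P0" unfolding ULP using Vc[OF s] P0p PV[OF s] by (simp add: sq_simps)
        show "adj (UL s * P0) * (UL s * P0) = P0"
          unfolding ULP adj_smult using Vc[OF s] P0p VV[OF s] kk by (simp add: smult_mult_smult[of _ N])
      qed
      moreover have "C s * syndrome_proj n m g s * U * P0 = complex_of_real (sqrt (lam s)) \<cdot>\<^sub>m (UL s * P0)"
      proof -
        have "complex_of_real (sqrt (lam s)) * k = 1" unfolding k_def using True by (simp flip: of_real_mult)
        then show ?thesis unfolding lhs ULP by simp
      qed
      ultimately show ?thesis ..
    next
      case False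
      then have l0: "lam s = 0" using lam_nn[OF s] by simp
      have "tr (adj (V s) * V s) = 0" using trV[OF s] l0 by simp
      then have V0: "V s = 0\<^sub>m N N" using tr_adj_self_zero[OF Vc[OF s]] by simp
      have ULs: "UL s = 1\<^sub>m N" unfolding UL_def using False by simp
      have "unitary_on_code N P0 (UL s)"
        unfolding unitary_on_code_def ULs using P0p by simp
      moreover have "C s * syndrome_proj n m g s * U * P0 = complex_of_real (sqrt (lam s)) \<cdot>\<^sub>m (UL s * P0)"
        unfolding lhs V0 ULs l0 using P0p by (intro eq_matI) auto
      ultimately show ?thesis ..
    qed
  qed
  show ?thesis
    by (rule exI[of _ lam], rule exI[of _ UL]) (use lam_nn sum_lam goal in auto)
qed


end


theorem theorem1:
  fixes n :: nat
    and g :: "nat \<Rightarrow> complex mat"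
    and C :: "bool list \<Rightarrow> complex mat"
    and U :: "complex mat"
  assumes n_pos: "n \<ge> 1"
    and gens: "stabilizer_generators n (n - 1) g"
    and recovery: "\<forall>s \<in> syndromes (n - 1).
        C s \<in> pauli_ops n \<and>
        syndrome_proj n (n - 1) g s * C s =
          C s * syndrome_proj n (n - 1) g (replicate (n - 1) False)"
    and U_unitary: "unitary_mat (2 ^ n) U"
    and even_weight: "\<forall>M \<in> stab_group n (n - 1) g. \<forall>c p.
        c \<in> phases \<and> M = c \<cdot>\<^sub>m pauli_mat n p \<longrightarrow> even (pauli_weight n p)"
    and css: "is_css n (stab_group n (n - 1) g)"
    and dx_odd: "odd (dist_x n (stab_group n (n - 1) g))"
    and dz_odd: "odd (dist_z n (stab_group n (n - 1) g))"
    and T_commute: "\<forall>v \<in> carrier_vec (2 ^ n). U *\<^sub>v time_rev n v = time_rev n (U *\<^sub>v v)"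
  shows "\<exists>p :: bool list \<Rightarrow> real. \<exists>UL :: bool list \<Rightarrow> complex mat.
     (\<forall>s \<in> syndromes (n - 1). p s \<ge> 0) \<and>
     (\<Sum>s \<in> syndromes (n - 1). p s) = 1 \<and>
     (\<forall>s \<in> syndromes (n - 1).
        unitary_on_code (2 ^ n) (syndrome_proj n (n - 1) g (replicate (n - 1) False)) (UL s) \<and>
        C s * syndrome_proj n (n - 1) g s * U * syndrome_proj n (n - 1) g (replicate (n - 1) False) =
          complex_of_real (sqrt (p s)) \<cdot>\<^sub>m
            (UL s * syndrome_proj n (n - 1) g (replicate (n - 1) False)))"
proof -
  have m: "Suc (n - 1) = n" using n_pos by simp
  interpret Q: qcode2 n "n - 1" g
    by unfold_locales (use m gens even_weight css dx_odd dz_odd in auto)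
  show ?thesis by (rule Q.main[OF recovery U_unitary T_commute])
qed

end
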